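(* Let $L$ be the star fork, the subfork, or the dot, and let $K,K'$ be proper pseudohexes such that $K$ is obtained from $K'$ by $L$-addition. Then $L_K$ can be safely reduced.
   Context: Pseudohex. A pseudohex is a bipartite graph $K$ (parallel edges allowed, no loops) whose edges are coloured blue, red and white, which is either empty or satisfies: (i) the blue edges form vertex-disjoint 6-cycles covering $V(K)$, called the hexagons of $K$; if a hexagon is the 6-cycle $v_0v_1\cdots v_5v_0$ we write $\bar{v_i}=v_{i+3}$ (indices mod 6); (ii) for each vertex $x$, $\{x,\bar x\}$ is a red edge of $K$ (further red edges may exist); (iii) the white edges form a perfect matching of $K$. A white edge $e=\{x,y\}$ is real if $\bar e=\{\bar x,\bar y\}$ is also a white edge and the only red edges sharing a vertex with $e$ or $\bar e$ are $\{x,\bar x\}$ and $\{y,\bar y\}$; non-real white edges are derived. An end is a red edge parallel to a white edge. $G^K$ is the graph whose vertices are the hexagons of $K$, two hexagons being adjacent iff some pair of real white edges $e,\bar e$ joins them. $K$ is proper if it has no end and $G^K$ is 2-connected with no cycle of length 2. Reduction. Let $h$ be a hexagon and $N$ one of the two perfect matchings of its blue 6-cycle. For each edge of $N$, let $P$ be the path formed by that edge and the two white edges adjacent to it. If $P$ is not a cycle of length 2, add a new white edge $e_P$ joining the end vertices of $P$, and for each red edge $\{u,w\}$ with $w$ an interior vertex of $P$ add a red edge $\{u,w'\}$ where $w'$ is the endpoint of $e_P$ in the same bipartition class as $w$. If $P$ is a cycle of length 2, then for each red edge $\{u,w\}$ with $w$ an interior vertex of $P$ add a red edge $\{u,\bar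 u\}$. Finally delete the vertices of $h$. Reducing hexagons $h_1,\dots,h_l$ by perfect matchings $N_1,\dots,N_l$ means performing these reductions successively; its contracted paths are the components (paths and cycles) of the subgraph of $K$ formed by $N_1\cup\dots\cup N_l$ together with all white edges having an endpoint in $V(h_1)\cup\dots\cup V(h_l)$. The reduction is safe if every contracted path/cycle contains at most one derived white edge of $K$; a set of hexagons can be safely reduced if some choice of perfect matchings gives a safe reduction. Fork-type graphs and addition. The star fork is $K_{1,3}$; the bold star fork has one half-edge at each of its three leaves. The subfork is a single edge (two vertices); the bold subfork has one half-edge at each of its two vertices. The dot is a single vertex; a bold dot has two or three half-edges attached to it. A graph is obtained from $G'$ by addition of the bold $L$ if it is obtained from the disjoint union of $G'$ and $L$ by joining each half-edge of the bold $L$ to a distinct vertex of degree 2 of $G'$. $K$ is obtained from $K'$ by $L$-addition if $G^K$ is obtained from $G^{K'}$ by addition of the bold $L$; $L_K$ is the set of hexagons of $K$ corresponding to the vertices of $L$. *)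

theory Defs
  imports Main
begin

datatype colour = Blue | Red | White

text \<open>A finite multigraph: vertex set, edge set (edges are abstract objects, so parallel
edges are allowed), endpoint map and colouring.\<close>
record ('v, 'e) cgraph =
  pverts :: "'v set"
  pedges :: "'e set"
  pends  :: "'e \<Rightarrow> 'v set"
  pcol   :: "'e \<Rightarrow> colour"

definition col_edges :: "('v, 'e) cgraph \<Rightarrow> colour \<Rightarrow> 'e set" where
  "col_edges K c = {e \<in> pedges K. pcol K e = c}"

definition wf_cgraph :: "('v, 'e) cgraph \<Rightarrow> bool" where
  "wf_cgraph K \<longleftrightarrow> finite (pverts K) \<and> finite (pedges K) \<and>
     (\<forall>e\<in>pedges K. pends K e \<subseteq> pverts K)"

text \<open>Bipartite (which also forces every edge to have two distinct ends: no loops).\<close>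
definition bipartite_cg :: "('v, 'e) cgraph \<Rightarrow> bool" where
  "bipartite_cg K \<longleftrightarrow> (\<exists>side :: 'v \<Rightarrow> bool.
     \<forall>e\<in>pedges K. \<exists>a b. pends K e = {a, b} \<and> side a \<noteq> side b)"

definition blue_cycle :: "('v, 'e) cgraph \<Rightarrow> 'v list \<Rightarrow> bool" where
  "blue_cycle K vs \<longleftrightarrow> length vs = 6 \<and> distinct vs \<and> set vs \<subseteq> pverts K \<and>
     (\<forall>i<6. \<exists>e\<in>col_edges K Blue. pends K e = {vs ! i, vs ! (Suc i mod 6)})"

definition blue_deg :: "('v, 'e) cgraph \<Rightarrow> 'v \<Rightarrow> nat" where
  "blue_deg K x = card {e \<in> col_edges K Blue. x \<in> pends K e}"

definition white_deg :: "('v, 'e) cgraph \<Rightarrow> 'v \<Rightarrow> nat" where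
  "white_deg K x = card {e \<in> col_edges K White. x \<in> pends K e}"

definition hexagons :: "('v, 'e) cgraph \<Rightarrow> 'v set set" where
  "hexagons K = {set vs | vs. blue_cycle K vs}"

definition bar :: "('v, 'e) cgraph \<Rightarrow> 'v \<Rightarrow> 'v" where
  "bar K x = (THE y. \<exists>vs i. blue_cycle K vs \<and> i < 6 \<and> vs ! i = x \<and> y = vs ! ((i + 3) mod 6))"

text \<open>Pseudohex: empty, or (i) blue edges form vertex-disjoint 6-cycles covering all
vertices (every vertex has blue degree 2 and lies on a blue 6-cycle), (ii) each
\<open>{x, bar x}\<close> is a red edge, (iii) white edges form a perfect matching.\<close>
definition pseudohex :: "('v, 'e) cgraph \<Rightarrow> bool" where
  "pseudohex K \<longleftrightarrow> wf_cgraph K \<and> bipartite_cg K \<and>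
     (pverts K = {} \<or>
      ((\<forall>x\<in>pverts K. blue_deg K x = 2 \<and> (\<exists>vs. blue_cycle K vs \<and> x \<in> set vs)) \<and>
       (\<forall>x\<in>pverts K. \<exists>r\<in>col_edges K Red. pends K r = {x, bar K x}) \<and>
       (\<forall>x\<in>pverts K. white_deg K x = 1)))"

definition real_edge :: "('v, 'e) cgraph \<Rightarrow> 'e \<Rightarrow> bool" where
  "real_edge K e \<longleftrightarrow> e \<in> col_edges K White \<and>
     (\<exists>x y. pends K e = {x, y} \<and>
        (\<exists>e'\<in>col_edges K White. pends K e' = {bar K x, bar K y}) \<and>
        (\<forall>r\<in>col_edges K Red. pends K r \<inter> {x, y, bar K x, bar K y} \<noteq> {} \<longrightarrow>
            pends K r = {x, bar K x} \<or> pends K r = {y, bar K y}))"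

definition derived_edge :: "('v, 'e) cgraph \<Rightarrow> 'e \<Rightarrow> bool" where
  "derived_edge K e \<longleftrightarrow> e \<in> col_edges K White \<and> \<not> real_edge K e"

definition has_end :: "('v, 'e) cgraph \<Rightarrow> bool" where
  "has_end K \<longleftrightarrow> (\<exists>r\<in>col_edges K Red. \<exists>w\<in>col_edges K White. pends K r = pends K w)"

definition joining :: "('v, 'e) cgraph \<Rightarrow> 'v set \<Rightarrow> 'v set \<Rightarrow> 'e set" where
  "joining K H1 H2 = {e. real_edge K e \<and> pends K e \<inter> H1 \<noteq> {} \<and> pends K e \<inter> H2 \<noteq> {}}"

definition gadj :: "('v, 'e) cgraph \<Rightarrow> 'v set \<Rightarrow> 'v set \<Rightarrow> bool" where
  "gadj K H1 H2 \<longleftrightarrow> H1 \<in> hexagons K \<and> H2 \<in> hexagons K \<and> H1 \<noteq> H2 \<and> joining K H1 H2 \<noteq> {}"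

definition gdeg :: "('v, 'e) cgraph \<Rightarrow> 'v set \<Rightarrow> nat" where
  "gdeg K H = card {H'. gadj K H H'}"

text \<open>\<open>G^K\<close> has no cycle of length 2: two distinct hexagons are joined by at most one
pair \<open>e, bar e\<close> of real white edges, i.e. by at most two real white edges.\<close>
definition no_2cycle :: "('v, 'e) cgraph \<Rightarrow> bool" where
  "no_2cycle K \<longleftrightarrow> (\<forall>H1\<in>hexagons K. \<forall>H2\<in>hexagons K. H1 \<noteq> H2 \<longrightarrow> card (joining K H1 H2) \<le> 2)"

definition connected_on :: "'a set \<Rightarrow> ('a \<Rightarrow> 'a \<Rightarrow> bool) \<Rightarrow> bool" where
  "connected_on W A \<longleftrightarrow> (\<forall>u\<in>W. \<forall>v\<in>W. (u, v) \<in> {(a, b). a \<in> W \<and> b \<in> W \<and> A a b}\<^sup>*)"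

definition two_connected :: "'a set \<Rightarrow> ('a \<Rightarrow> 'a \<Rightarrow> bool) \<Rightarrow> bool" where
  "two_connected W A \<longleftrightarrow> finite W \<and> card W \<ge> 3 \<and> connected_on W A \<and>
     (\<forall>x\<in>W. connected_on (W - {x}) A)"

definition proper :: "('v, 'e) cgraph \<Rightarrow> bool" where
  "proper K \<longleftrightarrow> pseudohex K \<and> \<not> has_end K \<and> two_connected (hexagons K) (gadj K) \<and> no_2cycle K"

datatype forktype = StarFork | Subfork | Dot

definition out_nbrs :: "('v, 'e) cgraph \<Rightarrow> 'v set set \<Rightarrow> 'v set \<Rightarrow> 'v set set" where
  "out_nbrs K S s = {t \<in> hexagons K - S. gadj K s t}"

text \<open>\<open>G^K[S]\<close> is the fork \<open>L\<close>, and each vertex of \<open>S\<close> has as many edges to the rest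
as the bold \<open>L\<close> has half-edges at that vertex.\<close>
definition bold_shape :: "forktype \<Rightarrow> ('v, 'e) cgraph \<Rightarrow> 'v set set \<Rightarrow> bool" where
  "bold_shape L K S = (case L of
     StarFork \<Rightarrow> (\<exists>c a1 a2 a3. S = {c, a1, a2, a3} \<and> distinct [c, a1, a2, a3] \<and>
        (\<forall>u\<in>S. \<forall>v\<in>S. gadj K u v \<longleftrightarrow>
            (u = c \<and> v \<in> {a1, a2, a3}) \<or> (v = c \<and> u \<in> {a1, a2, a3})) \<and>
        card (out_nbrs K S c) = 0 \<and> card (out_nbrs K S a1) = 1 \<and>
        card (out_nbrs K S a2) = 1 \<and> card (out_nbrs K S a3) = 1)
   | Subfork \<Rightarrow> (\<exists>a b. S = {a, b} \<and> a \<noteq> b \<and> gadj K a b \<and>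
        card (out_nbrs K S a) = 1 \<and> card (out_nbrs K S b) = 1)
   | Dot \<Rightarrow> (\<exists>a. S = {a} \<and> card (out_nbrs K S a) \<in> {2, 3}))"

text \<open>\<open>K\<close> is obtained from \<open>K'\<close> by \<open>L\<close>-addition, with \<open>L_K = S\<close>: \<open>G^K - S\<close> is isomorphic
(via \<open>\<phi>\<close>) to \<open>G^{K'}\<close>, \<open>G^K[S]\<close> together with the edges leaving \<open>S\<close> is the bold \<open>L\<close>, and the
half-edges are joined to pairwise distinct vertices of degree 2 of \<open>G^{K'}\<close>.\<close>
definition L_addition ::
  "forktype \<Rightarrow> ('w, 'f) cgraph \<Rightarrow> ('v, 'e) cgraph \<Rightarrow> 'v set set \<Rightarrow> bool" where
  "L_addition L K' K S \<longleftrightarrow> S \<subseteq> hexagons K \<and>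
     (\<exists>\<phi>. bij_betw \<phi> (hexagons K') (hexagons K - S) \<and>
        (\<forall>a\<in>hexagons K'. \<forall>b\<in>hexagons K'. gadj K' a b \<longleftrightarrow> gadj K (\<phi> a) (\<phi> b)) \<and>
        bold_shape L K S \<and>
        (\<forall>s1\<in>S. \<forall>s2\<in>S. s1 \<noteq> s2 \<longrightarrow> out_nbrs K S s1 \<inter> out_nbrs K S s2 = {}) \<and>
        (\<forall>s\<in>S. \<forall>t\<in>out_nbrs K S s. \<exists>u\<in>hexagons K'. \<phi> u = t \<and> gdeg K' u = 2))"

definition hex_pm :: "('v, 'e) cgraph \<Rightarrow> 'v set \<Rightarrow> 'e set \<Rightarrow> bool" where
  "hex_pm K h M \<longleftrightarrow> M \<subseteq> col_edges K Blue \<and> (\<forall>e\<in>M. pends K e \<subseteq> h) \<and>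
     (\<forall>x\<in>h. \<exists>!e. e \<in> M \<and> x \<in> pends K e)"

text \<open>Two edges of the edge set \<open>F\<close> lie in the same component of the subgraph formed by
\<open>F\<close> iff they are related by the reflexive-transitive closure of "share an endpoint".\<close>
definition edge_adj :: "('v, 'e) cgraph \<Rightarrow> 'e set \<Rightarrow> ('e \<times> 'e) set" where
  "edge_adj K F = {(e, f). e \<in> F \<and> f \<in> F \<and> pends K e \<inter> pends K f \<noteq> {}}"

definition contracted_edges :: "('v, 'e) cgraph \<Rightarrow> 'v set set \<Rightarrow> ('v set \<Rightarrow> 'e set) \<Rightarrow> 'e set" where
  "contracted_edges K S N =
     (\<Union>h\<in>S. N h) \<union> {w \<in> col_edges K White. pends K w \<inter> \<Union>S \<noteq> {}}"

text \<open>The set of hexagons \<open>S\<close> can be safely reduced: for some choice of perfect matchings,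
every contracted path/cycle contains at most one derived white edge of \<open>K\<close>.\<close>
definition safely_reducible :: "('v, 'e) cgraph \<Rightarrow> 'v set set \<Rightarrow> bool" where
  "safely_reducible K S \<longleftrightarrow> (\<exists>N. (\<forall>h\<in>S. hex_pm K h (N h)) \<and>
     (\<forall>d1\<in>contracted_edges K S N. \<forall>d2\<in>contracted_edges K S N.
        derived_edge K d1 \<and> derived_edge K d2 \<and>
        (d1, d2) \<in> (edge_adj K (contracted_edges K S N))\<^sup>* \<longrightarrow> d1 = d2))"

end

theory Submission
  imports Defs
begin

lemma lt6: "(i::nat) < 6 \<Longrightarrow> i = 0 \<or> i = 1 \<or> i = 2 \<or> i = 3 \<or> i = 4 \<or> i = 5" by auto
lemma cl_eq: "(i::nat) < 6 \<Longrightarrow> j < 6 \<Longrightarrow> (i mod 3 = j mod 3) = (j = i \<or> j = (i+3) mod 6)"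
  by (drule lt6, drule lt6, elim disjE, simp_all)

definition part :: "bool \<Rightarrow> nat \<Rightarrow> nat" where
 "part b k = (if even k = b then Suc k mod 6 else (k+5) mod 6)"

lemma part_lt: "part b k < 6" unfolding part_def by simp
lemma part_part: "k < 6 \<Longrightarrow> part b (part b k) = k"
  unfolding part_def by (cases b; drule lt6; elim disjE; simp)
lemma part_cl: "k < 6 \<Longrightarrow> part b k mod 3 \<noteq> k mod 3"
  unfolding part_def by (cases b; drule lt6; elim disjE; simp)
lemma part_even: "k < 6 \<Longrightarrow> even k = b \<Longrightarrow> part b k = Suc k mod 6"
  unfolding part_def by simp

definition bdi :: "bool \<Rightarrow> nat \<Rightarrow> nat \<Rightarrow> nat" where
 "bdi b p q = (if part b p mod 3 = q mod 3 then p else (p+3) mod 6)"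

lemma bdi_unique: "p < 6 \<Longrightarrow> q < 6 \<Longrightarrow> p mod 3 \<noteq> q mod 3 \<Longrightarrow> j < 6 \<Longrightarrow> j mod 3 = p mod 3
  \<Longrightarrow> part b j mod 3 = q mod 3 \<Longrightarrow> j = bdi b p q"
  unfolding bdi_def part_def
  by (cases b; drule lt6; drule lt6; drule lt6; elim disjE; simp)

lemma one_matched: "p < 6 \<Longrightarrow> i < 6 \<Longrightarrow> p mod 3 \<noteq> i mod 3 \<Longrightarrow> part b i mod 3 \<noteq> p mod 3
  \<Longrightarrow> part b ((i+3) mod 6) mod 3 = p mod 3"
  unfolding part_def
  by (cases b; drule lt6; drule lt6; elim disjE; simp)

lemma bdi_flip: "p < 6 \<Longrightarrow> q < 6 \<Longrightarrow> p mod 3 \<noteq> q mod 3 \<Longrightarrow> bdi True p q \<noteq> bdi False p q"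
  unfolding bdi_def part_def
  by (drule lt6; drule lt6; elim disjE; simp)

lemma bdi_in: "bdi b p q = p \<or> bdi b p q = (p+3) mod 6"
  unfolding bdi_def by simp

lemma id_opp: "(k::nat) < 6 \<Longrightarrow> k div 2 \<noteq> ((k+3) mod 6) div 2"
  by (drule lt6; elim disjE; simp)

lemma id_N0: "(k::nat) < 6 \<Longrightarrow> even k \<Longrightarrow> (Suc k mod 6) div 2 = k div 2"
  by (drule lt6; elim disjE; simp)

lemma id_pair: "d < 6 \<Longrightarrow> i < 6 \<Longrightarrow> d \<noteq> i \<Longrightarrow> d div 2 = i div 2 \<Longrightarrow> part True i = d"
  unfolding part_def by (drule lt6; drule lt6; elim disjE; simp)

lemma third_cl: "(p1::nat) mod 3 \<noteq> p2 mod 3 \<Longrightarrow> i mod 3 \<noteq> p1 mod 3 \<Longrightarrow> i mod 3 \<noteq> p2 mod 3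
  \<Longrightarrow> j mod 3 \<noteq> p1 mod 3 \<Longrightarrow> j mod 3 \<noteq> p2 mod 3 \<Longrightarrow> i mod 3 = j mod 3"
proof -
  assume a: "p1 mod 3 \<noteq> p2 mod 3" "i mod 3 \<noteq> p1 mod 3" "i mod 3 \<noteq> p2 mod 3"
   "j mod 3 \<noteq> p1 mod 3" "j mod 3 \<noteq> p2 mod 3"
  have "p1 mod 3 < 3" "p2 mod 3 < 3" "i mod 3 < 3" "j mod 3 < 3" by auto
  with a show ?thesis by linarith
qed

lemma third_ex: "(p1::nat) mod 3 \<noteq> p2 mod 3 \<Longrightarrow> \<exists>q<6. q mod 3 \<noteq> p1 mod 3 \<and> q mod 3 \<noteq> p2 mod 3"
proof -
  assume a: "p1 mod 3 \<noteq> p2 mod 3"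
  have "p1 mod 3 < 3" "p2 mod 3 < 3" by auto
  then have "p1 mod 3 \<noteq> 0 \<and> p2 mod 3 \<noteq> 0 \<or> p1 mod 3 \<noteq> 1 \<and> p2 mod 3 \<noteq> 1 \<or> p1 mod 3 \<noteq> 2 \<and> p2 mod 3 \<noteq> 2"
    using a by linarith
  then show ?thesis
    apply (elim disjE)
      apply (rule exI[of _ 0]; simp)
     apply (rule exI[of _ 1]; simp)
    apply (rule exI[of _ 2]; simp)
    done
qed

lemma even_opp: "(k::nat) < 6 \<Longrightarrow> even k \<noteq> even ((k+3) mod 6)"
  by (drule lt6; elim disjE; simp)

lemma mod6_opp: "(k::nat) < 6 \<Longrightarrow> ((k+3) mod 6 + 3) mod 6 = k"
  by (drule lt6; elim disjE; simp)



locale PH =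
  fixes K :: "('v,'e) cgraph"
  assumes wf: "wf_cgraph K" and bip: "bipartite_cg K"
    and bdeg: "\<And>x. x \<in> pverts K \<Longrightarrow> blue_deg K x = 2"
    and oncyc: "\<And>x. x \<in> pverts K \<Longrightarrow> \<exists>vs. blue_cycle K vs \<and> x \<in> set vs"
    and redbar: "\<And>x. x \<in> pverts K \<Longrightarrow> \<exists>r\<in>col_edges K Red. pends K r = {x, bar K x}"
    and wdeg: "\<And>x. x \<in> pverts K \<Longrightarrow> white_deg K x = 1"
    and noend: "\<not> has_end K"
begin

lemma col_sub: "col_edges K c \<subseteq> pedges K" unfolding col_edges_def by auto

lemma ends_pair: "e \<in> pedges K \<Longrightarrow> \<exists>a b. pends K e = {a,b} \<and> a \<noteq> b"
  using bip unfolding bipartite_cg_def by blast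

lemma ends_V: "e \<in> pedges K \<Longrightarrow> pends K e \<subseteq> pverts K"
  using wf unfolding wf_cgraph_def by blast

lemma finV: "finite (pverts K)" using wf unfolding wf_cgraph_def by blast
lemma finE: "finite (pedges K)" using wf unfolding wf_cgraph_def by blast

lemma white_ex1: "x \<in> pverts K \<Longrightarrow> \<exists>!e. e \<in> col_edges K White \<and> x \<in> pends K e"
proof -
  assume x: "x \<in> pverts K"
  have "card {e \<in> col_edges K White. x \<in> pends K e} = 1" using wdeg[OF x] unfolding white_deg_def .
  then obtain e where "{e \<in> col_edges K White. x \<in> pends K e} = {e}" by (rule card_1_singletonE)
  then show ?thesis by (metis (mono_tags, lifting) mem_Collect_eq singletonD singletonI)
qed

definition Wt :: "'v \<Rightarrow> 'e" where
  "Wt x = (THE e. e \<in> col_edges K White \<and> x \<in> pends K e)"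

lemma Wt_in: "x \<in> pverts K \<Longrightarrow> Wt x \<in> col_edges K White \<and> x \<in> pends K (Wt x)"
  unfolding Wt_def using theI'[OF white_ex1] by blast

lemma Wt_eq: "x \<in> pverts K \<Longrightarrow> e \<in> col_edges K White \<Longrightarrow> x \<in> pends K e \<Longrightarrow> e = Wt x"
  using white_ex1 Wt_in by blast

definition oth :: "'v \<Rightarrow> 'v" where
  "oth x = (THE y. y \<in> pends K (Wt x) \<and> y \<noteq> x)"

lemma oth_props: "x \<in> pverts K \<Longrightarrow> pends K (Wt x) = {x, oth x} \<and> oth x \<noteq> x"
proof -
  assume x: "x \<in> pverts K"
  have w: "Wt x \<in> pedges K" "x \<in> pends K (Wt x)" using Wt_in[OF x] col_sub by auto
  obtain a b where ab: "pends K (Wt x) = {a,b}" "a \<noteq> b" using ends_pair[OF w(1)] by blast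
  have ex: "\<exists>!y. y \<in> pends K (Wt x) \<and> y \<noteq> x" using ab w(2) by auto
  have "oth x \<in> pends K (Wt x) \<and> oth x \<noteq> x" unfolding oth_def using theI'[OF ex] .
  then show ?thesis using ab w(2) by auto
qed

lemma oth_V: "x \<in> pverts K \<Longrightarrow> oth x \<in> pverts K"
  using oth_props ends_V Wt_in col_sub by blast

lemma Wt_oth: "x \<in> pverts K \<Longrightarrow> Wt (oth x) = Wt x"
  by (metis Wt_eq Wt_in insertCI oth_V oth_props)

lemma oth_oth: "x \<in> pverts K \<Longrightarrow> oth (oth x) = x"
  by (metis Wt_oth doubleton_eq_iff oth_V oth_props)

lemma oth_inj: "x \<in> pverts K \<Longrightarrow> y \<in> pverts K \<Longrightarrow> oth x = oth y \<Longrightarrow> x = y"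
  by (metis oth_oth)

lemma Wt_same: "x \<in> pverts K \<Longrightarrow> y \<in> pverts K \<Longrightarrow> Wt x = Wt y \<Longrightarrow> y = x \<or> y = oth x"
  by (metis Wt_in insert_iff oth_props singletonD)

lemma white_ends: "e \<in> col_edges K White \<Longrightarrow> u \<in> pends K e \<Longrightarrow> u \<in> pverts K \<and> e = Wt u \<and> pends K e = {u, oth u}"
  by (metis Wt_eq col_sub ends_V oth_props subsetD)

end



lemma idx_lemmas: "(i::nat) < 6 \<Longrightarrow> Suc ((i + 5) mod 6) mod 6 = i \<and> (Suc i mod 6 + 5) mod 6 = i
   \<and> Suc i mod 6 \<noteq> (i+5) mod 6 \<and> Suc i mod 6 \<noteq> i \<and> (i+5) mod 6 \<noteq> i"
  by (drule lt6, elim disjE, simp_all)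

context PH begin

lemma blue_nb:
  assumes vs: "blue_cycle K vs" and i: "i < 6" and e: "e \<in> col_edges K Blue" and x: "vs ! i \<in> pends K e"
  shows "pends K e = {vs ! i, vs ! (Suc i mod 6)} \<or> pends K e = {vs ! ((i+5) mod 6), vs ! i}"
proof -
  have L: "length vs = 6" "distinct vs" "set vs \<subseteq> pverts K" using vs unfolding blue_cycle_def by auto
  obtain e1 where e1: "e1 \<in> col_edges K Blue" "pends K e1 = {vs ! i, vs ! (Suc i mod 6)}"
    using vs i unfolding blue_cycle_def by blast
  have i5: "(i+5) mod 6 < 6" by simp
  obtain e2 where e2: "e2 \<in> col_edges K Blue" "pends K e2 = {vs ! ((i+5) mod 6), vs ! i}"
    using vs i5 idx_lemmas[OF i] unfolding blue_cycle_def by metis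
  have ne: "vs ! (Suc i mod 6) \<noteq> vs ! ((i+5) mod 6)" "vs ! (Suc i mod 6) \<noteq> vs ! i"
    using idx_lemmas[OF i] L i by (simp_all add: nth_eq_iff_index_eq)
  have e12: "e1 \<noteq> e2" using e1 e2 ne by (metis doubleton_eq_iff)
  have xv: "vs ! i \<in> pverts K" using L i by auto
  let ?A = "{e \<in> col_edges K Blue. vs ! i \<in> pends K e}"
  have c2: "card ?A = 2" using bdeg[OF xv] unfolding blue_deg_def .
  have fin: "finite ?A" using c2 by (metis card.infinite zero_neq_numeral)
  have "e \<in> {e1, e2}"
  proof (rule ccontr)
    assume "e \<notin> {e1,e2}"
    then have "{e,e1,e2} \<subseteq> ?A" using e e1 e2 x by auto
    then have "card {e,e1,e2} \<le> 2" using card_mono[OF fin] c2 by metis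
    moreover have "card {e,e1,e2} = 3" using \<open>e \<notin> {e1,e2}\<close> e12 by simp
    ultimately show False by simp
  qed
  then show ?thesis using e1 e2 by auto
qed

lemma blue_step:
  assumes vs: "blue_cycle K vs" and ws: "blue_cycle K ws" and t: "t < 6" and a: "a < 6"
    and eq: "ws ! t = vs ! a"
  shows "ws ! (Suc t mod 6) = vs ! (Suc a mod 6) \<or> ws ! (Suc t mod 6) = vs ! ((a+5) mod 6)"
proof -
  obtain e where e: "e \<in> col_edges K Blue" "pends K e = {ws ! t, ws ! (Suc t mod 6)}"
    using ws t unfolding blue_cycle_def by blast
  have ne: "ws ! (Suc t mod 6) \<noteq> ws ! t"
    using ws t idx_lemmas[OF t] unfolding blue_cycle_def by (simp add: nth_eq_iff_index_eq)
  from blue_nb[OF vs a e(1)] e eq ne show ?thesis by (auto simp: doubleton_eq_iff)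
qed

lemma cyc_props: "blue_cycle K vs \<Longrightarrow> length vs = 6 \<and> distinct vs \<and> set vs \<subseteq> pverts K"
  unfolding blue_cycle_def by auto

lemma hex_sub:
  assumes vs: "blue_cycle K vs" and ws: "blue_cycle K ws" and j: "j < 6" and a: "a < 6"
    and eq: "ws ! j = vs ! a"
  shows "set ws \<subseteq> set vs"
proof -
  have L: "length vs = 6" "length ws = 6" using vs ws cyc_props by auto
  have k: "ws ! ((j + k) mod 6) \<in> set vs" for k
  proof (induction k)
    case 0 then show ?case using j eq L a by simp
  next
    case (Suc k)
    then obtain b where b: "b < 6" "ws ! ((j+k) mod 6) = vs ! b" using L by (metis in_set_conv_nth)
    have "ws ! (Suc ((j+k) mod 6) mod 6) \<in> set vs"
      using blue_step[OF vs ws _ b] b L by (metis mod_less_divisor nth_mem zero_less_numeral)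
    then show ?case by (simp add: mod_Suc_eq)
  qed
  show ?thesis
  proof
    fix x assume "x \<in> set ws"
    then obtain t where t: "t < 6" "ws ! t = x" using L by (metis in_set_conv_nth)
    have "(j + (t + 6 - j)) mod 6 = t" using t j by simp
    then show "x \<in> set vs" using k[of "t + 6 - j"] t by simp
  qed
qed

lemma idx3: "(i::nat) < 6 \<Longrightarrow>
   Suc (Suc i mod 6) mod 6 = (i+2) mod 6 \<and> (Suc i mod 6 + 5) mod 6 = i \<and>
   Suc ((i+2) mod 6) mod 6 = (i+3) mod 6 \<and> ((i+2) mod 6 + 5) mod 6 = Suc i mod 6 \<and>
   Suc ((i+5) mod 6) mod 6 = i \<and> ((i+5) mod 6 + 5) mod 6 = (i+4) mod 6 \<and>
   Suc ((i+4) mod 6) mod 6 = (i+5) mod 6 \<and> ((i+4) mod 6 + 5) mod 6 = (i+3) mod 6 \<and>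
   (i+2) mod 6 \<noteq> i \<and> (i+4) mod 6 \<noteq> i \<and> (i+3) mod 6 \<noteq> Suc i mod 6 \<and> (i+3) mod 6 \<noteq> (i+5) mod 6"
  by (drule lt6, elim disjE, simp_all)

lemma hex_opp:
  assumes vs: "blue_cycle K vs" and ws: "blue_cycle K ws" and j: "j < 6" and i: "i < 6"
    and eq: "ws ! j = vs ! i"
  shows "ws ! ((j+3) mod 6) = vs ! ((i+3) mod 6)"
proof -
  have L: "length vs = 6" "length ws = 6" "distinct vs" "distinct ws" using vs ws cyc_props by auto
  have dw: "\<And>a b. a < 6 \<Longrightarrow> b < 6 \<Longrightarrow> ws ! a = ws ! b \<longleftrightarrow> a = b" using L by (simp add: nth_eq_iff_index_eq)
  have dv: "\<And>a b. a < 6 \<Longrightarrow> b < 6 \<Longrightarrow> vs ! a = vs ! b \<longleftrightarrow> a = b" using L by (simp add: nth_eq_iff_index_eq)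
  note Ij = idx3[OF j] and Ii = idx3[OF i]
  have s1: "ws ! (Suc j mod 6) = vs ! (Suc i mod 6) \<or> ws ! (Suc j mod 6) = vs ! ((i+5) mod 6)"
    using blue_step[OF vs ws j i eq] .
  then show ?thesis
  proof
    assume a1: "ws ! (Suc j mod 6) = vs ! (Suc i mod 6)"
    have s2: "ws ! ((j+2) mod 6) = vs ! ((i+2) mod 6) \<or> ws ! ((j+2) mod 6) = vs ! i"
      using blue_step[OF vs ws _ _ a1] Ij Ii by simp
    have n2: "ws ! ((j+2) mod 6) \<noteq> vs ! i" using eq dw Ij j by (metis mod_less_divisor zero_less_numeral)
    have a2: "ws ! ((j+2) mod 6) = vs ! ((i+2) mod 6)" using s2 n2 by blast
    have s3: "ws ! ((j+3) mod 6) = vs ! ((i+3) mod 6) \<or> ws ! ((j+3) mod 6) = vs ! (Suc i mod 6)"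
      using blue_step[OF vs ws _ _ a2] Ij Ii by simp
    have n3: "ws ! ((j+3) mod 6) \<noteq> vs ! (Suc i mod 6)" using a1 dw Ij j by (metis mod_less_divisor zero_less_numeral)
    show ?thesis using s3 n3 by blast
  next
    assume a1: "ws ! (Suc j mod 6) = vs ! ((i+5) mod 6)"
    have s2: "ws ! ((j+2) mod 6) = vs ! i \<or> ws ! ((j+2) mod 6) = vs ! ((i+4) mod 6)"
      using blue_step[OF vs ws _ _ a1] Ij Ii by simp
    have n2: "ws ! ((j+2) mod 6) \<noteq> vs ! i" using eq dw Ij j by (metis mod_less_divisor zero_less_numeral)
    have a2: "ws ! ((j+2) mod 6) = vs ! ((i+4) mod 6)" using s2 n2 by blast
    have s3: "ws ! ((j+3) mod 6) = vs ! ((i+5) mod 6) \<or> ws ! ((j+3) mod 6) = vs ! ((i+3) mod 6)"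
      using blue_step[OF vs ws _ _ a2] Ij Ii by simp
    have n3: "ws ! ((j+3) mod 6) \<noteq> vs ! ((i+5) mod 6)" using a1 dw Ij j by (metis mod_less_divisor zero_less_numeral)
    show ?thesis using s3 n3 by blast
  qed
qed

end


context PH begin

lemma bar_vs: assumes vs: "blue_cycle K vs" and i: "i < 6"
  shows "bar K (vs ! i) = vs ! ((i+3) mod 6)"
  unfolding bar_def
proof (rule the_equality)
  show "\<exists>ws j. blue_cycle K ws \<and> j < 6 \<and> ws ! j = vs ! i \<and> vs ! ((i + 3) mod 6) = ws ! ((j + 3) mod 6)"
    using vs i by blast
next
  fix y assume "\<exists>ws j. blue_cycle K ws \<and> j < 6 \<and> ws ! j = vs ! i \<and> y = ws ! ((j + 3) mod 6)"
  then obtain ws j where "blue_cycle K ws" "j < 6" "ws ! j = vs ! i" "y = ws ! ((j + 3) mod 6)" by blast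
  then show "y = vs ! ((i + 3) mod 6)" using hex_opp[OF vs _ _ i] by blast
qed

lemma hex_iff: "H \<in> hexagons K \<longleftrightarrow> (\<exists>vs. blue_cycle K vs \<and> H = set vs)"
  unfolding hexagons_def by blast

lemma hex_eq: assumes vs: "blue_cycle K vs" and ws: "blue_cycle K ws" and x: "x \<in> set vs" "x \<in> set ws"
  shows "set vs = set ws"
proof -
  have L: "length vs = 6" "length ws = 6" using vs ws cyc_props by auto
  obtain i where i: "i < 6" "vs ! i = x" using x L by (metis in_set_conv_nth)
  obtain j where j: "j < 6" "ws ! j = x" using x L by (metis in_set_conv_nth)
  show ?thesis using hex_sub[OF vs ws j(1) i(1)] hex_sub[OF ws vs i(1) j(1)] i j by auto
qed

lemma hex_disj: "H1 \<in> hexagons K \<Longrightarrow> H2 \<in> hexagons K \<Longrightarrow> x \<in> H1 \<Longrightarrow> x \<in> H2 \<Longrightarrow> H1 = H2"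
  unfolding hex_iff using hex_eq by blast

lemma hex_V: "H \<in> hexagons K \<Longrightarrow> H \<subseteq> pverts K"
  unfolding hex_iff using cyc_props by blast

lemma V_hex: "x \<in> pverts K \<Longrightarrow> \<exists>H\<in>hexagons K. x \<in> H"
proof -
  assume "x \<in> pverts K"
  then obtain vs where "blue_cycle K vs" "x \<in> set vs" using oncyc by blast
  then have "set vs \<in> hexagons K" unfolding hexagons_def by blast
  then show ?thesis using \<open>x \<in> set vs\<close> by (rule bexI[rotated])
qed

lemma fin_hex: "finite (hexagons K)"
proof -
  have "hexagons K \<subseteq> Pow (pverts K)" using hex_V by blast
  then show ?thesis using finV by (metis finite_Pow_iff finite_subset)
qed

definition vsH :: "'v set \<Rightarrow> 'v list" where
  "vsH H = (SOME vs. blue_cycle K vs \<and> set vs = H)"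

lemma vsH: "H \<in> hexagons K \<Longrightarrow> blue_cycle K (vsH H) \<and> set (vsH H) = H"
proof -
  assume "H \<in> hexagons K"
  then obtain vs where "blue_cycle K vs \<and> set vs = H" unfolding hex_iff by blast
  then show ?thesis unfolding vsH_def by (rule someI)
qed

definition pos :: "'v set \<Rightarrow> 'v \<Rightarrow> nat" where
  "pos H v = (THE i. i < 6 \<and> vsH H ! i = v)"

lemma pos: assumes H: "H \<in> hexagons K" and v: "v \<in> H"
  shows "pos H v < 6 \<and> vsH H ! pos H v = v"
proof -
  have c: "blue_cycle K (vsH H)" "set (vsH H) = H" using vsH[OF H] by auto
  have L: "length (vsH H) = 6" "distinct (vsH H)" using c cyc_props by auto
  obtain i where i: "i < 6" "vsH H ! i = v" using v c L by (metis in_set_conv_nth)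
  have "\<exists>!i. i < 6 \<and> vsH H ! i = v"
  proof (rule ex1I[of _ i])
    show "i < 6 \<and> vsH H ! i = v" using i by simp
    fix j assume "j < 6 \<and> vsH H ! j = v"
    then show "j = i" using i L nth_eq_iff_index_eq[of "vsH H" j i] by auto
  qed
  then show ?thesis unfolding pos_def by (rule theI')
qed

lemma pos_nth: assumes H: "H \<in> hexagons K" and i: "i < 6" shows "pos H (vsH H ! i) = i"
proof -
  have c: "blue_cycle K (vsH H)" "set (vsH H) = H" using vsH[OF H] by auto
  have L: "length (vsH H) = 6" "distinct (vsH H)" using c cyc_props by auto
  have "vsH H ! i \<in> H" using c(2) L(1) i nth_mem[of i "vsH H"] by simp
  then have "pos H (vsH H ! i) < 6" "vsH H ! pos H (vsH H ! i) = vsH H ! i" using pos[OF H] by auto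
  then show ?thesis using L i by (simp add: nth_eq_iff_index_eq)
qed

lemma nth_in: "H \<in> hexagons K \<Longrightarrow> i < 6 \<Longrightarrow> vsH H ! i \<in> H"
  using vsH cyc_props by (metis nth_mem)

lemma pos_inj: "H \<in> hexagons K \<Longrightarrow> v \<in> H \<Longrightarrow> w \<in> H \<Longrightarrow> pos H v = pos H w \<Longrightarrow> v = w"
proof -
  assume a: "H \<in> hexagons K" "v \<in> H" "w \<in> H" "pos H v = pos H w"
  have "vsH H ! pos H v = v" "vsH H ! pos H w = w" using pos[OF a(1)] a(2,3) by auto
  then show ?thesis using a(4) by metis
qed

lemma bar_pos: assumes H: "H \<in> hexagons K" and v: "v \<in> H"
  shows "bar K v \<in> H \<and> pos H (bar K v) = (pos H v + 3) mod 6 \<and> bar K v = vsH H ! ((pos H v + 3) mod 6)"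
proof -
  have p: "pos H v < 6" "vsH H ! pos H v = v" using pos[OF H v] by auto
  have b: "bar K v = vsH H ! ((pos H v + 3) mod 6)" using bar_vs[OF conjunct1[OF vsH[OF H]] p(1)] p(2) by simp
  show ?thesis using b nth_in[OF H] pos_nth[OF H] by simp
qed

lemma bar_bar: assumes H: "H \<in> hexagons K" and v: "v \<in> H" shows "bar K (bar K v) = v"
proof -
  have p: "pos H v < 6" "vsH H ! pos H v = v" using pos[OF H v] by auto
  have b1: "bar K v \<in> H" "pos H (bar K v) = (pos H v + 3) mod 6" using bar_pos[OF H v] by auto
  have "bar K (bar K v) = vsH H ! ((pos H (bar K v) + 3) mod 6)"
    using bar_pos[OF H b1(1)] by blast
  then have "bar K (bar K v) = vsH H ! (((pos H v + 3) mod 6 + 3) mod 6)"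
    using b1 by simp
  then show ?thesis using mod6_opp[OF p(1)] p(2) by simp
qed

lemma bar_ne: assumes H: "H \<in> hexagons K" and v: "v \<in> H" shows "bar K v \<noteq> v"
proof -
  have p: "pos H v < 6" using pos[OF H v] by auto
  have "(pos H v + 3) mod 6 \<noteq> pos H v" using p by (drule_tac lt6, elim disjE, simp_all)
  moreover have "pos H (bar K v) = (pos H v + 3) mod 6" using bar_pos[OF H v] by blast
  ultimately show ?thesis by auto
qed

lemma cl_same: assumes H: "H \<in> hexagons K" and v: "v \<in> H" and w: "w \<in> H"
  shows "(pos H v mod 3 = pos H w mod 3) = (w = v \<or> w = bar K v)"
proof -
  have p: "pos H v < 6" "pos H w < 6" using pos[OF H v] pos[OF H w] by auto
  have "(pos H v mod 3 = pos H w mod 3) = (pos H w = pos H v \<or> pos H w = (pos H v + 3) mod 6)"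
    using cl_eq[OF p] .
  also have "\<dots> = (w = v \<or> w = bar K v)"
  proof -
    have b: "bar K v \<in> H" "pos H (bar K v) = (pos H v + 3) mod 6" using bar_pos[OF H v] by auto
    show ?thesis using pos_inj[OF H w v] pos_inj[OF H w b(1)] b(2) by auto
  qed
  finally show ?thesis .
qed

definition hx :: "'v \<Rightarrow> 'v set" where
  "hx v = (THE H. H \<in> hexagons K \<and> v \<in> H)"

lemma hx: "H \<in> hexagons K \<Longrightarrow> v \<in> H \<Longrightarrow> hx v = H"
  unfolding hx_def
  apply (rule the_equality)
   apply (rule conjI, assumption, assumption)
  using hex_disj by metis

lemma bar_V: "v \<in> pverts K \<Longrightarrow> bar K v \<in> pverts K \<and> bar K (bar K v) = v \<and> bar K v \<noteq> v \<and> hx (bar K v) = hx v"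
proof -
  assume "v \<in> pverts K"
  then obtain H where H: "H \<in> hexagons K" "v \<in> H" using V_hex by blast
  have b: "bar K v \<in> H" using bar_pos[OF H] by blast
  show ?thesis using b H hex_V[OF H(1)] bar_bar[OF H] bar_ne[OF H] hx[OF H(1)] by auto
qed

end


context PH begin

lemma no_oth_bar: assumes v: "v \<in> pverts K" shows "oth v \<noteq> bar K v"
proof
  assume a: "oth v = bar K v"
  obtain r where r: "r \<in> col_edges K Red" "pends K r = {v, bar K v}" using redbar[OF v] by blast
  have "pends K (Wt v) = {v, bar K v}" using oth_props[OF v] a by simp
  then have "has_end K" unfolding has_end_def using r Wt_in[OF v] by metis
  then show False using noend by simp
qed

lemma bar_inj: "a \<in> pverts K \<Longrightarrow> b \<in> pverts K \<Longrightarrow> bar K a = bar K b \<Longrightarrow> a = b"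
  using bar_V by metis

lemma real_W_bar:
  assumes x: "x \<in> pverts K" and re: "real_edge K (Wt x)"
  shows "oth (bar K x) = bar K (oth x) \<and> real_edge K (Wt (bar K x))"
proof -
  obtain a b e' where ab: "pends K (Wt x) = {a,b}" and e': "e' \<in> col_edges K White" "pends K e' = {bar K a, bar K b}"
    and rc: "\<forall>r\<in>col_edges K Red. pends K r \<inter> {a, b, bar K a, bar K b} \<noteq> {} \<longrightarrow>
            pends K r = {a, bar K a} \<or> pends K r = {b, bar K b}"
    using re unfolding real_edge_def by blast
  have ox: "oth x \<in> pverts K" using oth_V[OF x] .
  have xo: "pends K (Wt x) = {x, oth x}" "oth x \<noteq> x" using oth_props[OF x] by auto
  have abx: "{a,b} = {x, oth x}" using ab xo by simp
  have pe: "pends K e' = {bar K x, bar K (oth x)}" using e' abx by (auto simp: doubleton_eq_iff)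
  have bx: "bar K x \<in> pverts K" using bar_V[OF x] by blast
  have e'W: "e' = Wt (bar K x)" using Wt_eq[OF bx e'(1)] pe by simp
  have bne: "bar K x \<noteq> bar K (oth x)" using bar_inj[OF x ox] xo(2) by metis
  have obx: "oth (bar K x) = bar K (oth x)"
    using oth_props[OF bx] e'W pe bne by (metis doubleton_eq_iff)
  have bb: "bar K (bar K x) = x" "bar K (bar K (oth x)) = oth x" using bar_V x ox by auto
  have "real_edge K (Wt (bar K x))"
    unfolding real_edge_def
  proof (intro conjI exI)
    show "Wt (bar K x) \<in> col_edges K White" using Wt_in[OF bx] by blast
    show "pends K (Wt (bar K x)) = {bar K x, bar K (oth x)}" using pe e'W by simp
    show "\<exists>e'\<in>col_edges K White. pends K e' = {bar K (bar K x), bar K (bar K (oth x))}"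
      using Wt_in[OF x] xo bb by auto
    show "\<forall>r\<in>col_edges K Red. pends K r \<inter> {bar K x, bar K (oth x), bar K (bar K x), bar K (bar K (oth x))} \<noteq> {} \<longrightarrow>
            pends K r = {bar K x, bar K (bar K x)} \<or> pends K r = {bar K (oth x), bar K (bar K (oth x))}"
    proof (intro ballI impI)
      fix r assume r: "r \<in> col_edges K Red"
        "pends K r \<inter> {bar K x, bar K (oth x), bar K (bar K x), bar K (bar K (oth x))} \<noteq> {}"
      have s: "{bar K x, bar K (oth x), bar K (bar K x), bar K (bar K (oth x))} = {a, b, bar K a, bar K b}"
        using bb abx by (auto simp: doubleton_eq_iff)
      have "pends K r = {a, bar K a} \<or> pends K r = {b, bar K b}" using rc r s by auto
      then show "pends K r = {bar K x, bar K (bar K x)} \<or> pends K r = {bar K (oth x), bar K (bar K (oth x))}"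
        using abx bb by (auto simp: doubleton_eq_iff)
    qed
  qed
  then show ?thesis using obx by simp
qed

lemma real_ne: assumes x: "x \<in> pverts K" and re: "real_edge K (Wt x)" shows "Wt (bar K x) \<noteq> Wt x"
proof
  assume a: "Wt (bar K x) = Wt x"
  have bx: "bar K x \<in> pverts K" "bar K x \<noteq> x" using bar_V[OF x] by auto
  have "bar K x = x \<or> bar K x = oth x" using Wt_same[OF x bx(1) a[symmetric]] .
  then show False using bx(2) no_oth_bar[OF x] by auto
qed

lemma real_white: "real_edge K e \<Longrightarrow> e \<in> col_edges K White"
  unfolding real_edge_def by blast

lemma gadj_sym: "gadj K H1 H2 \<Longrightarrow> gadj K H2 H1"
  unfolding gadj_def joining_def by blast

lemma join_char:
  assumes H1: "H1 \<in> hexagons K" and H2: "H2 \<in> hexagons K" and ne: "H1 \<noteq> H2"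
  shows "e \<in> joining K H1 H2 \<longleftrightarrow> (\<exists>x\<in>H1. e = Wt x \<and> oth x \<in> H2 \<and> real_edge K e)"
proof
  assume "e \<in> joining K H1 H2"
  then have e: "real_edge K e" "pends K e \<inter> H1 \<noteq> {}" "pends K e \<inter> H2 \<noteq> {}" unfolding joining_def by auto
  obtain x where x: "x \<in> pends K e" "x \<in> H1" using e(2) by blast
  obtain y where y: "y \<in> pends K e" "y \<in> H2" using e(3) by blast
  have w: "x \<in> pverts K" "e = Wt x" "pends K e = {x, oth x}" using white_ends[OF real_white[OF e(1)] x(1)] by auto
  have "y \<noteq> x" using hex_disj[OF H1 H2] x y ne by blast
  then have "y = oth x" using w y by auto
  then show "\<exists>x\<in>H1. e = Wt x \<and> oth x \<in> H2 \<and> real_edge K e" using x w y e by blast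
next
  assume "\<exists>x\<in>H1. e = Wt x \<and> oth x \<in> H2 \<and> real_edge K e"
  then obtain x where x: "x \<in> H1" "e = Wt x" "oth x \<in> H2" "real_edge K e" by blast
  have xv: "x \<in> pverts K" using hex_V[OF H1] x by blast
  show "e \<in> joining K H1 H2" unfolding joining_def using x oth_props[OF xv] by auto
qed

lemma gadj_ex: assumes "gadj K H1 H2" shows "\<exists>x\<in>H1. real_edge K (Wt x) \<and> oth x \<in> H2"
proof -
  have g: "H1 \<in> hexagons K" "H2 \<in> hexagons K" "H1 \<noteq> H2" "joining K H1 H2 \<noteq> {}"
    using assms unfolding gadj_def by auto
  then obtain e where "e \<in> joining K H1 H2" by blast
  then obtain x where "x \<in> H1" "e = Wt x" "oth x \<in> H2" "real_edge K e" using join_char[OF g(1-3)] by blast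
  then show ?thesis by blast
qed

lemma bar_out: assumes H: "H \<in> hexagons K" and w: "w \<in> pverts K" "w \<notin> H" shows "bar K w \<notin> H"
proof
  assume b: "bar K w \<in> H"
  obtain H' where H': "H' \<in> hexagons K" "w \<in> H'" using V_hex[OF w(1)] by blast
  have "bar K w \<in> H'" using bar_pos[OF H'] by blast
  then have "H = H'" using hex_disj[OF H H'(1) b] by blast
  then show False using H' w by simp
qed

lemma join_bar: assumes H1: "H1 \<in> hexagons K" and H2: "H2 \<in> hexagons K"
  and x: "x \<in> H1" "oth x \<in> H2" "real_edge K (Wt x)"
  shows "bar K x \<in> H1 \<and> oth (bar K x) \<in> H2 \<and> real_edge K (Wt (bar K x))"
proof -
  have xv: "x \<in> pverts K" using hex_V[OF H1] x by blast
  have b1: "bar K x \<in> H1" using bar_pos[OF H1 x(1)] by blast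
  have b2: "bar K (oth x) \<in> H2" using bar_pos[OF H2 x(2)] by blast
  show ?thesis using real_W_bar[OF xv x(3)] b1 b2 by simp
qed

lemma join_two:
  assumes H1: "H1 \<in> hexagons K" and H2: "H2 \<in> hexagons K" and ne: "H1 \<noteq> H2"
    and c2: "card (joining K H1 H2) \<le> 2"
    and x: "x \<in> H1" "oth x \<in> H2" "real_edge K (Wt x)"
    and y: "y \<in> H1" "oth y \<in> H2" "real_edge K (Wt y)"
  shows "y = x \<or> y = bar K x"
proof (rule ccontr)
  assume n: "\<not> (y = x \<or> y = bar K x)"
  have xv: "x \<in> pverts K" and yv: "y \<in> pverts K" using hex_V[OF H1] x y by auto
  have bx: "bar K x \<in> H1" "oth (bar K x) \<in> H2" "real_edge K (Wt (bar K x))" using join_bar[OF H1 H2 x] by auto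
  have bxv: "bar K x \<in> pverts K" using bar_V[OF xv] by blast
  have j: "Wt x \<in> joining K H1 H2" "Wt (bar K x) \<in> joining K H1 H2" "Wt y \<in> joining K H1 H2"
    using join_char[OF H1 H2 ne] x y bx by blast+
  have d1: "Wt x \<noteq> Wt (bar K x)" using real_ne[OF xv x(3)] by simp
  have dj: "\<And>a. a \<in> H1 \<Longrightarrow> oth a \<in> H2 \<Longrightarrow> y \<noteq> oth a" using hex_disj[OF H1 H2] y(1) ne by blast
  have d2: "Wt y \<noteq> Wt x" using Wt_same[OF xv yv] n dj[OF x(1,2)] by metis
  have d3: "Wt y \<noteq> Wt (bar K x)" using Wt_same[OF bxv yv] n dj[OF bx(1,2)] by metis
  have fin: "finite (joining K H1 H2)"
    by (rule finite_subset[OF _ finE]) (auto simp: joining_def dest!: real_white intro: subsetD[OF col_sub])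
  have "card {Wt x, Wt (bar K x), Wt y} \<le> card (joining K H1 H2)" using j by (intro card_mono[OF fin]) auto
  moreover have "card {Wt x, Wt (bar K x), Wt y} = 3" using d1 d2 d3 by simp
  ultimately show False using c2 by simp
qed

lemma cls_real: assumes H: "H \<in> hexagons K" and y: "y \<in> H" "real_edge K (Wt y)"
  and u: "u \<in> H" "pos H u mod 3 = pos H y mod 3" shows "real_edge K (Wt u)"
proof -
  have yv: "y \<in> pverts K" using hex_V[OF H] y by blast
  have "u = y \<or> u = bar K y" using cl_same[OF H y(1) u(1)] u(2) by simp
  then show ?thesis using real_W_bar[OF yv y(2)] y by auto
qed

lemma cls_out: assumes H: "H \<in> hexagons K" and y: "y \<in> H" "real_edge K (Wt y)" "oth y \<notin> H"
  and u: "u \<in> H" "pos H u mod 3 = pos H y mod 3" shows "oth u \<notin> H"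
proof -
  have yv: "y \<in> pverts K" using hex_V[OF H] y by blast
  have oy: "oth y \<in> pverts K" using oth_V[OF yv] .
  have "u = y \<or> u = bar K y" using cl_same[OF H y(1) u(1)] u(2) by simp
  then show ?thesis using real_W_bar[OF yv y(2)] y bar_out[OF H oy y(3)] by auto
qed

lemma ext_int:
  assumes H: "H \<in> hexagons K" and y1: "y1 \<in> H" "real_edge K (Wt y1)" "oth y1 \<notin> H"
    and y2: "y2 \<in> H" "real_edge K (Wt y2)" "oth y2 \<notin> H"
    and d: "pos H y1 mod 3 \<noteq> pos H y2 mod 3"
    and u: "u \<in> H" "oth u \<in> H"
  shows False
proof -
  have uv: "u \<in> pverts K" using hex_V[OF H] u by blast
  have c1: "pos H u mod 3 \<noteq> pos H y1 mod 3" "pos H u mod 3 \<noteq> pos H y2 mod 3"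
    using cls_out[OF H y1 u(1)] cls_out[OF H y2 u(1)] u(2) by auto
  have oo: "oth (oth u) = u" using oth_oth[OF uv] .
  have c2: "pos H (oth u) mod 3 \<noteq> pos H y1 mod 3" "pos H (oth u) mod 3 \<noteq> pos H y2 mod 3"
    using cls_out[OF H y1 u(2)] cls_out[OF H y2 u(2)] oo u(1) by auto
  have "pos H u mod 3 = pos H (oth u) mod 3" using third_cl[OF d] c1 c2 by blast
  then have "oth u = u \<or> oth u = bar K u" using cl_same[OF H u(1) u(2)] by simp
  then show False using oth_props[OF uv] no_oth_bar[OF uv] by auto
qed

end



lemma idx_m: "(i::nat) < 6 \<Longrightarrow> even i \<noteq> b \<Longrightarrow> even ((i+5) mod 6) = b \<and> Suc ((i+5) mod 6) mod 6 = i"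
  by (cases b; drule lt6; elim disjE; simp)

context PH begin

definition be :: "'v list \<Rightarrow> nat \<Rightarrow> 'e" where
  "be vs k = (SOME e. e \<in> col_edges K Blue \<and> pends K e = {vs ! k, vs ! (Suc k mod 6)})"

lemma be: "blue_cycle K vs \<Longrightarrow> k < 6 \<Longrightarrow> be vs k \<in> col_edges K Blue \<and> pends K (be vs k) = {vs ! k, vs ! (Suc k mod 6)}"
  unfolding be_def blue_cycle_def by (rule someI_ex) blast

definition Nm :: "bool \<Rightarrow> 'v list \<Rightarrow> 'e set" where
  "Nm b vs = {be vs k | k. k < 6 \<and> even k = b}"

lemma Nm_edge: "blue_cycle K vs \<Longrightarrow> e \<in> Nm b vs \<Longrightarrow> \<exists>k<6. even k = b \<and> e = be vs k \<and> pends K e = {vs ! k, vs ! (part b k)}"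
proof -
  assume vs: "blue_cycle K vs" and "e \<in> Nm b vs"
  then obtain k where k: "k < 6" "even k = b" "e = be vs k" unfolding Nm_def by blast
  have "pends K e = {vs ! k, vs ! (Suc k mod 6)}" using be[OF vs k(1)] k(3) by simp
  then show ?thesis using k part_even[OF k(1,2)] by auto
qed

lemma Nm_pm: assumes vs: "blue_cycle K vs" shows "hex_pm K (set vs) (Nm b vs)"
proof -
  have L: "length vs = 6" "distinct vs" using cyc_props[OF vs] by auto
  have sub: "Nm b vs \<subseteq> col_edges K Blue" using be[OF vs] unfolding Nm_def by blast
  have ends: "\<forall>e\<in>Nm b vs. pends K e \<subseteq> set vs" using be[OF vs] L unfolding Nm_def by auto
  have ex1: "\<exists>!e. e \<in> Nm b vs \<and> x \<in> pends K e" if x: "x \<in> set vs" for x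
  proof -
    obtain i where i: "i < 6" "vs ! i = x" using x L by (metis in_set_conv_nth)
    define e0 where "e0 = (if even i = b then be vs i else be vs ((i+5) mod 6))"
    have e0: "e0 \<in> Nm b vs \<and> x \<in> pends K e0"
    proof (cases "even i = b")
      case True then show ?thesis unfolding e0_def Nm_def using be[OF vs i(1)] i by auto
    next
      case False
      have m: "even ((i+5) mod 6) = b" "Suc ((i+5) mod 6) mod 6 = i" using idx_m[OF i(1) False] by auto
      have "(i+5) mod 6 < 6" by simp
      then show ?thesis unfolding e0_def Nm_def using be[OF vs, of "(i+5) mod 6"] m False i by auto
    qed
    show ?thesis
    proof (rule ex1I[of _ e0])
      show "e0 \<in> Nm b vs \<and> x \<in> pends K e0" using e0 .
      fix e assume e: "e \<in> Nm b vs \<and> x \<in> pends K e"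
      then obtain k where k: "k < 6" "even k = b" "e = be vs k" unfolding Nm_def by blast
      have pk: "pends K e = {vs ! k, vs ! (Suc k mod 6)}" using be[OF vs k(1)] k by simp
      have "vs ! i = vs ! k \<or> vs ! i = vs ! (Suc k mod 6)" using e pk i by auto
      moreover have "Suc k mod 6 < 6" by simp
      ultimately have "i = k \<or> i = Suc k mod 6" using L i k nth_eq_iff_index_eq[of vs i] by metis
      then show "e = e0"
      proof
        assume "i = k" then show ?thesis unfolding e0_def using k by simp
      next
        assume ik: "i = Suc k mod 6"
        have "even i \<noteq> b \<and> k = (i+5) mod 6" using k ik by (drule_tac lt6, cases b, elim disjE, simp_all, elim disjE, simp_all)
        then show ?thesis unfolding e0_def using k by simp
      qed
    qed
  qed
  show ?thesis unfolding hex_pm_def using sub ends ex1 by blast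
qed

end


context PH begin

lemma G:
  fixes cls :: "'v \<Rightarrow> 'c"
  assumes S: "S \<subseteq> hexagons K" and pm: "\<forall>h\<in>S. hex_pm K h (N h)"
    and ca: "\<And>h e u v. h \<in> S \<Longrightarrow> e \<in> N h \<Longrightarrow> u \<in> pends K e \<Longrightarrow> v \<in> pends K e \<Longrightarrow> cls u = cls v"
    and cb: "\<And>e u v. real_edge K e \<Longrightarrow> u \<in> pends K e \<Longrightarrow> v \<in> pends K e \<Longrightarrow> u \<in> \<Union>S \<Longrightarrow> v \<in> \<Union>S \<Longrightarrow> cls u = cls v"
    and cc: "\<And>u v. u \<in> \<Union>S \<Longrightarrow> v \<in> \<Union>S \<Longrightarrow> derived_edge K (Wt u) \<Longrightarrow> derived_edge K (Wt v) \<Longrightarrow> cls u = cls v \<Longrightarrow> u = v"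
  shows "safely_reducible K S"
proof -
  let ?C = "contracted_edges K S N"
  define lab where "lab v = Wt ` {d \<in> \<Union>S. derived_edge K (Wt d) \<and> cls d = cls v}" for v
  define Phi where "Phi e = lab (SOME u. u \<in> pends K e \<inter> \<Union>S)" for e
  have SV: "\<Union>S \<subseteq> pverts K" using S hex_V by blast
  have Nsub: "\<And>h e. h \<in> S \<Longrightarrow> e \<in> N h \<Longrightarrow> e \<in> col_edges K Blue \<and> pends K e \<subseteq> h"
    using pm unfolding hex_pm_def by blast
  have labD: "lab u = {Wt u}" if u: "u \<in> \<Union>S" "derived_edge K (Wt u)" for u
  proof -
    have "{d \<in> \<Union>S. derived_edge K (Wt d) \<and> cls d = cls u} = {u}" using cc u by blast
    then show ?thesis unfolding lab_def by simp
  qed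
  have C1: "\<exists>u. u \<in> pends K e \<inter> \<Union>S" if e: "e \<in> ?C" for e
  proof (cases "\<exists>h\<in>S. e \<in> N h")
    case True
    then obtain h where h: "h \<in> S" "e \<in> N h" by blast
    have "e \<in> pedges K" using Nsub[OF h] col_sub by blast
    then obtain a b where "pends K e = {a,b}" using ends_pair by blast
    then show ?thesis using Nsub[OF h] h by blast
  next
    case False then show ?thesis using e unfolding contracted_edges_def by blast
  qed
  have C2: "lab u = lab v" if e: "e \<in> ?C" and u: "u \<in> pends K e" "u \<in> \<Union>S" and v: "v \<in> pends K e" "v \<in> \<Union>S" for e u v
  proof (cases "\<exists>h\<in>S. e \<in> N h")
    case True
    then obtain h where h: "h \<in> S" "e \<in> N h" by blast
    show ?thesis unfolding lab_def using ca[OF h u(1) v(1)] by simp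
  next
    case False
    then have w: "e \<in> col_edges K White" using e unfolding contracted_edges_def by blast
    show ?thesis
    proof (cases "real_edge K e")
      case True then show ?thesis unfolding lab_def using cb[OF True u(1) v(1) u(2) v(2)] by simp
    next
      case False
      have d: "derived_edge K e" using w False unfolding derived_edge_def by simp
      have "e = Wt u" "e = Wt v" using white_ends[OF w u(1)] white_ends[OF w v(1)] by auto
      then show ?thesis using labD[OF u(2)] labD[OF v(2)] d by simp
    qed
  qed
  have C3: "Phi e = lab u" if e: "e \<in> ?C" and u: "u \<in> pends K e" "u \<in> \<Union>S" for e u
  proof -
    have "(SOME u. u \<in> pends K e \<inter> \<Union>S) \<in> pends K e \<inter> \<Union>S" using C1[OF e] by (metis someI_ex)
    then show ?thesis unfolding Phi_def using C2[OF e _ _ u] by blast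
  qed
  have C4: "Phi e = Phi f" if ef: "(e,f) \<in> edge_adj K ?C" for e f
  proof -
    have ef': "e \<in> ?C" "f \<in> ?C" "pends K e \<inter> pends K f \<noteq> {}" using ef unfolding edge_adj_def by auto
    then obtain z where z: "z \<in> pends K e" "z \<in> pends K f" by blast
    show ?thesis
    proof (cases "z \<in> \<Union>S")
      case True then show ?thesis using C3[OF ef'(1) z(1)] C3[OF ef'(2) z(2)] by simp
    next
      case False
      have we: "e \<in> col_edges K White" using ef'(1) False z(1) Nsub unfolding contracted_edges_def by blast
      have wf': "f \<in> col_edges K White" using ef'(2) False z(2) Nsub unfolding contracted_edges_def by blast
      have "e = Wt z" "f = Wt z" using white_ends[OF we z(1)] white_ends[OF wf' z(2)] by auto
      then show ?thesis by simp
    qed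
  qed
  have C5: "Phi e = Phi f" if "(e,f) \<in> (edge_adj K ?C)\<^sup>*" for e f
    using that by (induction rule: rtrancl_induct) (auto dest: C4)
  have C6: "Phi d = {d}" if d: "d \<in> ?C" "derived_edge K d" for d
  proof -
    obtain u where u: "u \<in> pends K d" "u \<in> \<Union>S" using C1[OF d(1)] by blast
    have w: "d \<in> col_edges K White" using d(2) unfolding derived_edge_def by blast
    have "d = Wt u" using white_ends[OF w u(1)] by auto
    then show ?thesis using C3[OF d(1) u] labD[OF u(2)] d(2) by simp
  qed
  show ?thesis unfolding safely_reducible_def
  proof (intro exI conjI ballI impI)
    show "\<And>h. h \<in> S \<Longrightarrow> hex_pm K h (N h)" using pm by blast
    fix d1 d2 assume d: "d1 \<in> ?C" "d2 \<in> ?C" and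
      c: "derived_edge K d1 \<and> derived_edge K d2 \<and> (d1, d2) \<in> (edge_adj K ?C)\<^sup>*"
    show "d1 = d2" using C5[of d1 d2] C6[OF d(1)] C6[OF d(2)] c by simp
  qed
qed

end



lemma mod3_opp: "((p::nat) + 3) mod 6 mod 3 = p mod 3"
proof -
  have "((p::nat) + 3) mod 6 mod 3 = (p + 3) mod 3" by (rule mod_mod_cancel) simp
  then show ?thesis by simp
qed
context PH begin

lemma GL:
  fixes c :: "'v set" and S :: "'v set set" and xs rs :: "'v set \<Rightarrow> 'v" and ms :: "'v set \<Rightarrow> bool"
  assumes S: "S \<subseteq> hexagons K" "c \<in> S"
  and X: "\<And>s. s \<in> S \<Longrightarrow> s \<noteq> c \<Longrightarrow> xs s \<in> s \<and> oth (xs s) \<in> c \<and> real_edge K (Wt (xs s))"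
  and R: "\<And>s. s \<in> S \<Longrightarrow> s \<noteq> c \<Longrightarrow> rs s \<in> s \<and> pos s (rs s) mod 3 \<noteq> pos s (xs s) mod 3"
  and H3: "\<And>e u v. real_edge K e \<Longrightarrow> u \<in> pends K e \<Longrightarrow> v \<in> pends K e \<Longrightarrow> u \<in> \<Union>S \<Longrightarrow> v \<in> \<Union>S \<Longrightarrow> u \<noteq> v
     \<Longrightarrow> \<exists>s\<in>S. s \<noteq> c \<and> (e = Wt (xs s) \<or> e = Wt (bar K (xs s)))"
  and H4c: "\<And>u v. u \<in> c \<Longrightarrow> v \<in> c \<Longrightarrow> derived_edge K (Wt u) \<Longrightarrow> derived_edge K (Wt v) \<Longrightarrow> pos c u mod 3 = pos c v mod 3"
  and H4s: "\<And>s v. s \<in> S \<Longrightarrow> s \<noteq> c \<Longrightarrow> v \<in> s \<Longrightarrow> derived_edge K (Wt v) \<Longrightarrow> pos s v mod 3 = pos s (rs s) mod 3"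
  and H5i: "\<And>s s'. s \<in> S \<Longrightarrow> s' \<in> S \<Longrightarrow> s \<noteq> c \<Longrightarrow> s' \<noteq> c \<Longrightarrow> s \<noteq> s' \<Longrightarrow>
     pos c (oth (vsH s ! bdi (ms s) (pos s (xs s)) (pos s (rs s)))) div 2 \<noteq>
     pos c (oth (vsH s' ! bdi (ms s') (pos s' (xs s')) (pos s' (rs s')))) div 2"
  and H5ii: "\<And>s d. s \<in> S \<Longrightarrow> s \<noteq> c \<Longrightarrow> d \<in> c \<Longrightarrow> derived_edge K (Wt d) \<Longrightarrow>
     pos c d div 2 \<noteq> pos c (oth (vsH s ! bdi (ms s) (pos s (xs s)) (pos s (rs s)))) div 2"
  shows "safely_reducible K S"
proof -
  have hS: "\<And>s. s \<in> S \<Longrightarrow> s \<in> hexagons K" using S by blast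
  have hc: "c \<in> hexagons K" using S by blast
  have notc: "\<And>s v. s \<in> S \<Longrightarrow> s \<noteq> c \<Longrightarrow> v \<in> s \<Longrightarrow> v \<notin> c" using hex_disj hS hc by metis
  define N where "N h = (if h = c then Nm True (vsH c) else Nm (ms h) (vsH h))" for h
  define cls where "cls v = (if v \<in> c then (c, pos c v div 2) else
    (if pos (hx v) v mod 3 = pos (hx v) (xs (hx v)) mod 3 then (c, pos c (oth v) div 2)
     else if part (ms (hx v)) (pos (hx v) v) mod 3 = pos (hx v) (xs (hx v)) mod 3
       then (c, pos c (oth (vsH (hx v) ! part (ms (hx v)) (pos (hx v) v))) div 2)
     else (hx v, 7::nat)))" for v
  have clsc: "\<And>v. v \<in> c \<Longrightarrow> cls v = (c, pos c v div 2)" unfolding cls_def by simp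
  have clss: "cls (vsH s ! k) = (if k mod 3 = pos s (xs s) mod 3 then (c, pos c (oth (vsH s ! k)) div 2)
     else if part (ms s) k mod 3 = pos s (xs s) mod 3 then (c, pos c (oth (vsH s ! part (ms s) k)) div 2)
     else (s, 7))" if s: "s \<in> S" "s \<noteq> c" and k: "k < 6" for s k
  proof -
    have v: "vsH s ! k \<in> s" using nth_in[OF hS[OF s(1)] k] .
    have "hx (vsH s ! k) = s" using hx[OF hS[OF s(1)] v] .
    moreover have "pos s (vsH s ! k) = k" using pos_nth[OF hS[OF s(1)] k] .
    moreover have "vsH s ! k \<notin> c" using notc[OF s v] .
    ultimately show ?thesis unfolding cls_def by simp
  qed
  have xcl: "oth w \<in> c \<and> real_edge K (Wt w)" if s: "s \<in> S" "s \<noteq> c" and w: "w \<in> s" "pos s w mod 3 = pos s (xs s) mod 3" for s w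
  proof -
    have x: "xs s \<in> s" "oth (xs s) \<in> c" "real_edge K (Wt (xs s))" using X[OF s] by auto
    have "w = xs s \<or> w = bar K (xs s)" using cl_same[OF hS[OF s(1)] x(1) w(1)] w(2) by simp
    then show ?thesis using join_bar[OF hS[OF s(1)] hc x] x by auto
  qed
  have pmN: "\<forall>h\<in>S. hex_pm K h (N h)"
  proof
    fix h assume h: "h \<in> S"
    have v: "blue_cycle K (vsH h)" "set (vsH h) = h" using vsH[OF hS[OF h]] by auto
    show "hex_pm K h (N h)" unfolding N_def using Nm_pm[OF v(1)] v(2) by (cases "h = c") auto
  qed
  have ca: "cls u = cls v" if h: "h \<in> S" "e \<in> N h" and u: "u \<in> pends K e" and v: "v \<in> pends K e" for h e u v
  proof (cases "h = c")
    case True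
    have "e \<in> Nm True (vsH c)" using h True unfolding N_def by simp
    then obtain k where k: "k < 6" "even k" "pends K e = {vsH c ! k, vsH c ! part True k}"
      using Nm_edge[OF conjunct1[OF vsH[OF hc]], of e True] by blast
    have pk: "part True k = Suc k mod 6" using part_even[OF k(1)] k(2) by simp
    have "cls (vsH c ! k) = cls (vsH c ! part True k)"
      using clsc nth_in[OF hc] pos_nth[OF hc] k pk id_N0[OF k(1,2)] by simp
    then show ?thesis using u v k(3) by auto
  next
    case False
    have "e \<in> Nm (ms h) (vsH h)" using h False unfolding N_def by simp
    then obtain k where k: "k < 6" "pends K e = {vsH h ! k, vsH h ! part (ms h) k}"
      using Nm_edge[OF conjunct1[OF vsH[OF hS[OF h(1)]]], of e "ms h"] by blast
    let ?b = "ms h" and ?px = "pos h (xs h)"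
    have pk: "part ?b k < 6" "part ?b (part ?b k) = k" "part ?b k mod 3 \<noteq> k mod 3"
      using part_lt part_part[OF k(1)] part_cl[OF k(1)] by auto
    have "cls (vsH h ! k) = cls (vsH h ! part ?b k)"
      using clss[OF h(1) False k(1)] clss[OF h(1) False pk(1)] pk by auto
    then show ?thesis using u v k(2) by auto
  qed
  have cb: "cls u = cls v" if e: "real_edge K e" and u: "u \<in> pends K e" "u \<in> \<Union>S" and v: "v \<in> pends K e" "v \<in> \<Union>S" for e u v
  proof (cases "u = v")
    case True then show ?thesis by simp
  next
    case False
    obtain s where s: "s \<in> S" "s \<noteq> c" "e = Wt (xs s) \<or> e = Wt (bar K (xs s))" using H3[OF e u(1) v(1) u(2) v(2) False] by blast
    have x: "xs s \<in> s" using X[OF s(1,2)] by blast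
    obtain w where w: "w \<in> s" "pos s w mod 3 = pos s (xs s) mod 3" "e = Wt w"
    proof (cases "e = Wt (xs s)")
      case True then show ?thesis using that x by blast
    next
      case False
      then have e': "e = Wt (bar K (xs s))" using s(3) by blast
      have "bar K (xs s) \<in> s" "pos s (bar K (xs s)) = (pos s (xs s) + 3) mod 6" using bar_pos[OF hS[OF s(1)] x] by auto
      then show ?thesis using that e' mod3_opp by auto
    qed
    have wv: "w \<in> pverts K" using hex_V[OF hS[OF s(1)]] w(1) by blast
    have ow: "oth w \<in> c" using xcl[OF s(1,2) w(1,2)] by blast
    have pw: "pos s w < 6" "vsH s ! pos s w = w" using pos[OF hS[OF s(1)] w(1)] by auto
    have cw: "cls w = (c, pos c (oth w) div 2)" using clss[OF s(1,2) pw(1)] pw(2) w(2) by simp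
    have cow: "cls (oth w) = (c, pos c (oth w) div 2)" using clsc[OF ow] by simp
    have "pends K e = {w, oth w}" using oth_props[OF wv] w(3) by simp
    then show ?thesis using u v cw cow by auto
  qed
  have satD: "cls v = (c, pos c (oth (vsH s ! bdi (ms s) (pos s (xs s)) (pos s (rs s)))) div 2) \<or> cls v = (s, 7)"
    if s: "s \<in> S" "s \<noteq> c" and v: "v \<in> s" "derived_edge K (Wt v)" for s v
  proof -
    have H: "s \<in> hexagons K" using hS[OF s(1)] .
    have pv: "pos s v < 6" "vsH s ! pos s v = v" using pos[OF H v(1)] by auto
    have x: "xs s \<in> s" using X[OF s] by blast
    have r: "rs s \<in> s" "pos s (rs s) mod 3 \<noteq> pos s (xs s) mod 3" using R[OF s] by auto
    have px: "pos s (xs s) < 6" and pr: "pos s (rs s) < 6" using pos[OF H x] pos[OF H r(1)] by auto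
    have cv: "pos s v mod 3 = pos s (rs s) mod 3" using H4s[OF s v] .
    show ?thesis
    proof (cases "part (ms s) (pos s v) mod 3 = pos s (xs s) mod 3")
      case True
      have "part (ms s) (pos s v) = bdi (ms s) (pos s (xs s)) (pos s (rs s))"
        by (rule bdi_unique[OF px pr not_sym[OF r(2)] part_lt True])
           (use part_part[OF pv(1)] cv in simp)
      then show ?thesis using clss[OF s pv(1)] pv(2) True cv r(2) by simp
    next
      case False then show ?thesis using clss[OF s pv(1)] pv(2) cv r(2) by simp
    qed
  qed
  have cc: "u = v" if u: "u \<in> \<Union>S" and v: "v \<in> \<Union>S" and du: "derived_edge K (Wt u)" and dv: "derived_edge K (Wt v)"
    and eq: "cls u = cls v" for u v
  proof -
    obtain su where su: "su \<in> S" "u \<in> su" using u by blast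
    obtain sv where sv: "sv \<in> S" "v \<in> sv" using v by blast
    show ?thesis
    proof (cases "u \<in> c")
      case uc: True
      show ?thesis
      proof (cases "v \<in> c")
        case vc: True
        have "pos c u mod 3 = pos c v mod 3" using H4c[OF uc vc du dv] .
        then have "v = u \<or> v = bar K u" using cl_same[OF hc uc vc] by simp
        moreover have "pos c u div 2 = pos c v div 2" using eq clsc[OF uc] clsc[OF vc] by simp
        moreover have "pos c u < 6" using pos[OF hc uc] by blast
        ultimately show ?thesis using bar_pos[OF hc uc] id_opp by metis
      next
        case vc: False
        have svc: "sv \<noteq> c" using vc sv by blast
        show ?thesis using satD[OF sv(1) svc sv(2) dv] eq clsc[OF uc] H5ii[OF sv(1) svc uc du] svc by auto
      qed
    next
      case uc: False
      have suc: "su \<noteq> c" using uc su by blast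
      show ?thesis
      proof (cases "v \<in> c")
        case vc: True
        show ?thesis using satD[OF su(1) suc su(2) du] eq clsc[OF vc] H5ii[OF su(1) suc vc dv] suc by auto
      next
        case vc: False
        have svc: "sv \<noteq> c" using vc sv by blast
        show ?thesis
        proof (cases "su = sv")
          case False
          show ?thesis using satD[OF su(1) suc su(2) du] satD[OF sv(1) svc sv(2) dv] eq H5i[OF su(1) sv(1) suc svc False]
            False suc svc by auto
        next
          case True
          let ?s = su
          have H: "?s \<in> hexagons K" using hS[OF su(1)] .
          have v': "v \<in> ?s" using sv True by simp
          have x: "xs ?s \<in> ?s" using X[OF su(1) suc] by blast
          have r: "rs ?s \<in> ?s" "pos ?s (rs ?s) mod 3 \<noteq> pos ?s (xs ?s) mod 3" using R[OF su(1) suc] by auto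
          have px: "pos ?s (xs ?s) < 6" and pr: "pos ?s (rs ?s) < 6" using pos[OF H x] pos[OF H r(1)] by auto
          have cu: "pos ?s u mod 3 = pos ?s (rs ?s) mod 3" using H4s[OF su(1) suc su(2) du] .
          have cv: "pos ?s v mod 3 = pos ?s (rs ?s) mod 3" using H4s[OF su(1) suc v' dv] .
          have pu: "pos ?s u < 6" "vsH ?s ! pos ?s u = u" using pos[OF H su(2)] by auto
          have pv: "pos ?s v < 6" "vsH ?s ! pos ?s v = v" using pos[OF H v'] by auto
          show ?thesis
          proof (rule ccontr)
            assume ne: "u \<noteq> v"
            have "v = bar K u" using cl_same[OF H su(2) v'] cu cv ne by auto
            moreover have "pos ?s (bar K u) = (pos ?s u + 3) mod 6" using bar_pos[OF H su(2)] by blast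
            ultimately have pvu: "pos ?s v = (pos ?s u + 3) mod 6" by simp
            let ?b = "ms ?s"
            have cu': "cls u = (if part ?b (pos ?s u) mod 3 = pos ?s (xs ?s) mod 3 then
                 (c, pos c (oth (vsH ?s ! part ?b (pos ?s u))) div 2) else (?s, 7))"
              using clss[OF su(1) suc pu(1)] pu(2) cu r(2) by simp
            have cv': "cls v = (if part ?b (pos ?s v) mod 3 = pos ?s (xs ?s) mod 3 then
                 (c, pos c (oth (vsH ?s ! part ?b (pos ?s v))) div 2) else (?s, 7))"
              using clss[OF su(1) suc pv(1)] pv(2) cv r(2) by simp
            show False
            proof (cases "part ?b (pos ?s u) mod 3 = pos ?s (xs ?s) mod 3")
              case A: True
              show False
              proof (cases "part ?b (pos ?s v) mod 3 = pos ?s (xs ?s) mod 3")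
                case B: True
                have e1: "part ?b (pos ?s u) = bdi ?b (pos ?s (xs ?s)) (pos ?s (rs ?s))"
                  by (rule bdi_unique[OF px pr not_sym[OF r(2)] part_lt A]) (use part_part[OF pu(1)] cu in simp)
                have e2: "part ?b (pos ?s v) = bdi ?b (pos ?s (xs ?s)) (pos ?s (rs ?s))"
                  by (rule bdi_unique[OF px pr not_sym[OF r(2)] part_lt B]) (use part_part[OF pv(1)] cv in simp)
                have "pos ?s u = pos ?s v" using e1 e2 part_part[OF pu(1)] part_part[OF pv(1)] by metis
                then show False using ne pu pv by metis
              next
                case B: False
                then show False using cu' cv' A suc eq by simp
              qed
            next
              case A: False
              have "pos ?s u mod 3 \<noteq> pos ?s (xs ?s) mod 3" using cu r(2) by simp
              then have "part ?b ((pos ?s u + 3) mod 6) mod 3 = pos ?s (xs ?s) mod 3"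
                using one_matched[OF px pu(1) _ A] by auto
              then show False using cu' cv' A suc eq pvu by simp
            qed
          qed
        qed
      qed
    qed
  qed
  show ?thesis by (rule G[OF S(1) pmN ca cb cc])
qed

end


context PH begin

lemma derived_not_real: "derived_edge K e \<Longrightarrow> \<not> real_edge K e" unfolding derived_edge_def by simp

lemma int_edge: assumes e: "real_edge K e" and u: "u \<in> pends K e" and v: "v \<in> pends K e" and ne: "u \<noteq> v"
  shows "u \<in> pverts K \<and> e = Wt u \<and> v = oth u"
  using white_ends[OF real_white[OF e] u] v ne by auto

lemma ext_cl_ne: assumes H: "H \<in> hexagons K" and t1: "t1 \<in> hexagons K" and t2: "t2 \<in> hexagons K" and t12: "t1 \<noteq> t2"
  and x1: "x1 \<in> H" "real_edge K (Wt x1)" "oth x1 \<in> t1" and x2: "x2 \<in> H" "real_edge K (Wt x2)" "oth x2 \<in> t2"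
  shows "pos H x1 mod 3 \<noteq> pos H x2 mod 3"
proof
  assume "pos H x1 mod 3 = pos H x2 mod 3"
  then have "x2 = x1 \<or> x2 = bar K x1" using cl_same[OF H x1(1) x2(1)] by simp
  then have "oth x2 \<in> t1" using join_bar[OF H t1 x1(1,3,2)] x1 by auto
  then show False using hex_disj[OF t1 t2 _ x2(3)] t12 by blast
qed

lemma dot_case:
  assumes a: "a \<in> hexagons K" and t1: "t1 \<in> hexagons K" and t2: "t2 \<in> hexagons K"
    and ne: "t1 \<noteq> t2" "t1 \<noteq> a" "t2 \<noteq> a" and g: "gadj K a t1" "gadj K a t2"
  shows "safely_reducible K {a}"
proof -
  obtain x1 where x1: "x1 \<in> a" "real_edge K (Wt x1)" "oth x1 \<in> t1" using gadj_ex[OF g(1)] by blast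
  obtain x2 where x2: "x2 \<in> a" "real_edge K (Wt x2)" "oth x2 \<in> t2" using gadj_ex[OF g(2)] by blast
  have d: "pos a x1 mod 3 \<noteq> pos a x2 mod 3" using ext_cl_ne[OF a t1 t2 ne(1) x1 x2] .
  have o1: "oth x1 \<notin> a" using hex_disj[OF a t1 _ x1(3)] ne(2) by blast
  have o2: "oth x2 \<notin> a" using hex_disj[OF a t2 _ x2(3)] ne(3) by blast
  show ?thesis
  proof (rule GL[of "{a}" a xs rs ms for xs rs ms])
    show "{a} \<subseteq> hexagons K" using a by simp
    show "a \<in> {a}" by simp
  next
    fix e u v assume e: "real_edge K e" and u: "u \<in> pends K e" "u \<in> \<Union>{a}" and v: "v \<in> pends K e" "v \<in> \<Union>{a}" and uv: "u \<noteq> v"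
    have i: "u \<in> pverts K" "e = Wt u" "v = oth u" using int_edge[OF e u(1) v(1) uv] by auto
    have False using ext_int[OF a x1(1,2) o1 x2(1,2) o2 d, of u] u v i by simp
    then show "\<exists>s\<in>{a}. s \<noteq> a \<and> (e = Wt (xs s) \<or> e = Wt (bar K (xs s)))" for xs :: "'v set \<Rightarrow> 'v" by simp
  next
    fix u v assume u: "u \<in> a" and v: "v \<in> a" and du: "derived_edge K (Wt u)" and dv: "derived_edge K (Wt v)"
    have "pos a u mod 3 \<noteq> pos a x1 mod 3" "pos a u mod 3 \<noteq> pos a x2 mod 3"
      using cls_real[OF a x1(1,2) u] cls_real[OF a x2(1,2) u] derived_not_real[OF du] by auto
    moreover have "pos a v mod 3 \<noteq> pos a x1 mod 3" "pos a v mod 3 \<noteq> pos a x2 mod 3"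
      using cls_real[OF a x1(1,2) v] cls_real[OF a x2(1,2) v] derived_not_real[OF dv] by auto
    ultimately show "pos a u mod 3 = pos a v mod 3" using third_cl[OF d] by blast
  qed auto
qed

end


context PH begin

lemma img_pair:
  assumes s: "s \<in> hexagons K" and c: "c \<in> hexagons K" and x: "x \<in> s" "oth x \<in> c" "real_edge K (Wt x)"
    and pr: "pr < 6" "pr mod 3 \<noteq> pos s x mod 3"
  shows "(\<forall>m. pos c (oth (vsH s ! bdi m (pos s x) pr)) = pos c (oth x) \<or>
              pos c (oth (vsH s ! bdi m (pos s x) pr)) = (pos c (oth x) + 3) mod 6) \<and>
         pos c (oth (vsH s ! bdi True (pos s x) pr)) \<noteq> pos c (oth (vsH s ! bdi False (pos s x) pr))"
proof -
  have px: "pos s x < 6" "vsH s ! pos s x = x" using pos[OF s x(1)] by auto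
  have bx: "vsH s ! ((pos s x + 3) mod 6) = bar K x" using bar_pos[OF s x(1)] by simp
  have jb: "bar K x \<in> s" "oth (bar K x) \<in> c" "real_edge K (Wt (bar K x))" using join_bar[OF s c x] by auto
  have xv: "x \<in> pverts K" using hex_V[OF s] x(1) by blast
  have ob: "oth (bar K x) = bar K (oth x)" using real_W_bar[OF xv x(3)] by simp
  have pb0: "pos c (bar K (oth x)) = (pos c (oth x) + 3) mod 6" using bar_pos[OF c x(2)] by blast
  have pb: "pos c (oth (bar K x)) = (pos c (oth x) + 3) mod 6" using pb0 ob by simp
  have k: "pos c (oth x) < 6" using pos[OF c x(2)] by blast
  have ne: "pos c (oth x) \<noteq> (pos c (oth x) + 3) mod 6" using k by (drule_tac lt6, elim disjE, simp_all)
  have f: "bdi True (pos s x) pr \<noteq> bdi False (pos s x) pr" using bdi_flip[OF px(1) pr(1) not_sym[OF pr(2)]] .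
  have m: "pos c (oth (vsH s ! bdi m (pos s x) pr)) = (if bdi m (pos s x) pr = pos s x then pos c (oth x)
      else (pos c (oth x) + 3) mod 6)" for m
    using bdi_in[of m "pos s x" pr] px bx pb by auto
  show ?thesis using m f ne bdi_in[of _ "pos s x" pr] by (metis)
qed

lemma subfork_case:
  assumes n2: "no_2cycle K"
    and a: "a \<in> hexagons K" and b: "b \<in> hexagons K" and ab: "a \<noteq> b" and gab: "gadj K b a"
    and ta: "ta \<in> hexagons K" "ta \<noteq> a" "ta \<noteq> b" "gadj K a ta"
    and tb: "tb \<in> hexagons K" "tb \<noteq> a" "tb \<noteq> b" "gadj K b tb"
  shows "safely_reducible K {a, b}"
proof -
  obtain x where x: "x \<in> b" "real_edge K (Wt x)" "oth x \<in> a" using gadj_ex[OF gab] by blast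
  obtain zb where zb: "zb \<in> b" "real_edge K (Wt zb)" "oth zb \<in> tb" using gadj_ex[OF tb(4)] by blast
  obtain za where za: "za \<in> a" "real_edge K (Wt za)" "oth za \<in> ta" using gadj_ex[OF ta(4)] by blast
  have xv: "x \<in> pverts K" using hex_V[OF b] x(1) by blast
  define y where "y = oth x"
  have y: "y \<in> a" "real_edge K (Wt y)" "oth y \<in> b" using x Wt_oth[OF xv] oth_oth[OF xv] unfolding y_def by auto
  have dxz: "pos b x mod 3 \<noteq> pos b zb mod 3" using ext_cl_ne[OF b a tb(1) not_sym[OF tb(2)] x(1,2,3) zb] .
  have dyz: "pos a y mod 3 \<noteq> pos a za mod 3" using ext_cl_ne[OF a b ta(1) not_sym[OF ta(3)] y za] .
  obtain qb where qb: "qb < 6" "qb mod 3 \<noteq> pos b x mod 3" "qb mod 3 \<noteq> pos b zb mod 3" using third_ex[OF dxz] by blast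
  obtain qa where qa: "qa < 6" "qa mod 3 \<noteq> pos a y mod 3" "qa mod 3 \<noteq> pos a za mod 3" using third_ex[OF dyz] by blast
  define rb where "rb = vsH b ! qb"
  have rb: "rb \<in> b" "pos b rb = qb" unfolding rb_def using nth_in[OF b qb(1)] pos_nth[OF b qb(1)] by auto
  have ob_a: "oth x \<notin> b" and oz_b: "oth zb \<notin> b" and oy_a: "oth y \<notin> a" and oz_a: "oth za \<notin> a"
    using hex_disj[OF a b] hex_disj[OF tb(1) b] hex_disj[OF b a] hex_disj[OF ta(1) a] ab ta tb x zb y za by blast+
  have ip: "pos b x mod 3 \<noteq> pos b rb mod 3" using rb qb by simp
  note IP = img_pair[OF b a x(1,3,2) qb(1) qb(2)]
  define k0 where "k0 = bdi True (pos a y) qa"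
  obtain m where m: "pos a (oth (vsH b ! bdi m (pos b x) qb)) \<noteq> k0"
    using IP by metis
  have c2: "\<And>H1 H2. H1 \<in> hexagons K \<Longrightarrow> H2 \<in> hexagons K \<Longrightarrow> H1 \<noteq> H2 \<Longrightarrow> card (joining K H1 H2) \<le> 2"
    using n2 unfolding no_2cycle_def by blast
  show ?thesis
  proof (rule GL[of "{a,b}" a "\<lambda>_. x" "\<lambda>_. rb" "\<lambda>_. m"])
    show "{a, b} \<subseteq> hexagons K" using a b by simp
    show "a \<in> {a, b}" by simp
  next
    fix s assume s: "s \<in> {a,b}" "s \<noteq> a"
    then have sb: "s = b" by simp
    show "x \<in> s \<and> oth x \<in> a \<and> real_edge K (Wt x)" using sb x by simp
    show "rb \<in> s \<and> pos s rb mod 3 \<noteq> pos s x mod 3" using sb rb qb by simp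
  next
    fix e u v assume e: "real_edge K e" and u: "u \<in> pends K e" "u \<in> \<Union>{a,b}" and v: "v \<in> pends K e" "v \<in> \<Union>{a,b}" and uv: "u \<noteq> v"
    have i: "u \<in> pverts K" "e = Wt u" "v = oth u" using int_edge[OF e u(1) v(1) uv] by auto
    have re: "real_edge K (Wt u)" using e i by simp
    have "e = Wt x \<or> e = Wt (bar K x)"
    proof (cases "u \<in> a")
      case ua: True
      have vb: "v \<in> b"
      proof (rule ccontr)
        assume "v \<notin> b" then have "v \<in> a" using v by auto
        then show False using ext_int[OF a y(1,2) oy_a za(1,2) oz_a dyz ua] i by simp
      qed
      have "u = y \<or> u = bar K y" using join_two[OF a b ab c2[OF a b ab] y(1) y(3) y(2) ua _ re] vb i by simp
      moreover have "Wt (bar K y) = Wt (bar K x)"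
      proof -
        have "bar K y = oth (bar K x)" using real_W_bar[OF xv x(2)] unfolding y_def by simp
        then show ?thesis using Wt_oth bar_V[OF xv] by simp
      qed
      ultimately show ?thesis using i Wt_oth[OF xv] unfolding y_def by auto
    next
      case ua: False
      then have ub: "u \<in> b" using u by auto
      have va: "v \<in> a"
      proof (rule ccontr)
        assume "v \<notin> a" then have "v \<in> b" using v by auto
        then show False using ext_int[OF b x(1,2) ob_a zb(1,2) oz_b dxz ub] i by simp
      qed
      have "u = x \<or> u = bar K x" using join_two[OF b a not_sym[OF ab] c2[OF b a not_sym[OF ab]] x(1,3,2) ub _ re] va i by simp
      then show ?thesis using i by auto
    qed
    then show "\<exists>s\<in>{a, b}. s \<noteq> a \<and> (e = Wt x \<or> e = Wt (bar K x))" using ab by auto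
  next
    fix u v assume u: "u \<in> a" and v: "v \<in> a" and du: "derived_edge K (Wt u)" and dv: "derived_edge K (Wt v)"
    have "pos a u mod 3 \<noteq> pos a y mod 3" "pos a u mod 3 \<noteq> pos a za mod 3"
      using cls_real[OF a y(1,2) u] cls_real[OF a za(1,2) u] derived_not_real[OF du] by auto
    moreover have "pos a v mod 3 \<noteq> pos a y mod 3" "pos a v mod 3 \<noteq> pos a za mod 3"
      using cls_real[OF a y(1,2) v] cls_real[OF a za(1,2) v] derived_not_real[OF dv] by auto
    ultimately show "pos a u mod 3 = pos a v mod 3" using third_cl[OF dyz] by blast
  next
    fix s v assume s: "s \<in> {a,b}" "s \<noteq> a" and v: "v \<in> s" and dv: "derived_edge K (Wt v)"
    have sb: "s = b" using s by simp
    have "pos b v mod 3 \<noteq> pos b x mod 3" "pos b v mod 3 \<noteq> pos b zb mod 3"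
      using cls_real[OF b x(1,2)] cls_real[OF b zb(1,2)] v sb derived_not_real[OF dv] by auto
    then have "pos b v mod 3 = qb mod 3" using third_cl[OF dxz] qb by blast
    then show "pos s v mod 3 = pos s rb mod 3" using sb rb by simp
  next
    fix s s' assume "s \<in> {a,b}" "s' \<in> {a,b}" "s \<noteq> a" "s' \<noteq> a" "s \<noteq> s'"
    then show "pos a (oth (vsH s ! bdi m (pos s x) (pos s rb))) div 2 \<noteq> pos a (oth (vsH s' ! bdi m (pos s' x) (pos s' rb))) div 2"
      by simp
  next
    fix s d assume s: "s \<in> {a,b}" "s \<noteq> a" and d: "d \<in> a" and dd: "derived_edge K (Wt d)"
    have sb: "s = b" using s by simp
    let ?im = "pos a (oth (vsH b ! bdi m (pos b x) qb))"
    have im: "?im = pos a y \<or> ?im = (pos a y + 3) mod 6" using IP unfolding y_def by blast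
    have cd: "pos a d mod 3 \<noteq> pos a y mod 3" "pos a d mod 3 \<noteq> pos a za mod 3"
      using cls_real[OF a y(1,2) d] cls_real[OF a za(1,2) d] derived_not_real[OF dd] by auto
    have cdq: "pos a d mod 3 = qa mod 3" using third_cl[OF dyz cd] qa by blast
    have py: "pos a y < 6" using pos[OF a y(1)] by blast
    have pd: "pos a d < 6" using pos[OF a d] by blast
    have imlt: "?im < 6" using im py by auto
    have imc: "?im mod 3 = pos a y mod 3" using im mod3_opp by auto
    show "pos a d div 2 \<noteq> pos a (oth (vsH s ! bdi m (pos s x) (pos s rb))) div 2"
    proof
      assume eq: "pos a d div 2 = pos a (oth (vsH s ! bdi m (pos s x) (pos s rb))) div 2"
      then have eq': "pos a d div 2 = ?im div 2" using sb rb by simp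
      have "pos a d \<noteq> ?im" using cd(1) imc by auto
      then have pt: "part True ?im = pos a d" using id_pair[OF pd imlt] eq' by simp
      have "?im = bdi True (pos a y) qa"
        by (rule bdi_unique[OF py qa(1) not_sym[OF qa(2)] imlt imc]) (use pt cdq in simp)
      then show False using m k0_def by simp
    qed
  qed
qed

end



lemma even_div2: "(i::nat) < 6 \<Longrightarrow> j < 6 \<Longrightarrow> even i \<Longrightarrow> even j \<Longrightarrow> i \<noteq> j \<Longrightarrow> i div 2 \<noteq> j div 2"
  by (drule lt6, drule lt6, elim disjE, simp_all)

context PH begin

lemma star_general:
  assumes n2: "no_2cycle K" and c: "c \<in> hexagons K" and A: "A \<subseteq> hexagons K" "c \<notin> A"
    and adjc: "\<And>s. s \<in> A \<Longrightarrow> gadj K s c"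
    and outs: "\<And>s. s \<in> A \<Longrightarrow> \<exists>t\<in>hexagons K. t \<notin> A \<and> t \<noteq> c \<and> gadj K s t"
    and nadj: "\<And>s s'. s \<in> A \<Longrightarrow> s' \<in> A \<Longrightarrow> s \<noteq> s' \<Longrightarrow> \<not> gadj K s s'"
    and creal: "\<And>u. u \<in> c \<Longrightarrow> real_edge K (Wt u)"
    and cint: "\<And>u. u \<in> c \<Longrightarrow> oth u \<notin> c"
  shows "safely_reducible K (insert c A)"
proof -
  have c2: "\<And>H1 H2. H1 \<in> hexagons K \<Longrightarrow> H2 \<in> hexagons K \<Longrightarrow> H1 \<noteq> H2 \<Longrightarrow> card (joining K H1 H2) \<le> 2"
    using n2 unfolding no_2cycle_def by blast
  have hA: "\<And>s. s \<in> A \<Longrightarrow> s \<in> hexagons K" using A by blast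
  have sc: "\<And>s. s \<in> A \<Longrightarrow> s \<noteq> c" using A by blast
  have "\<forall>s\<in>A. \<exists>x. x \<in> s \<and> real_edge K (Wt x) \<and> oth x \<in> c" using adjc gadj_ex by blast
  then obtain xs where xs: "\<And>s. s \<in> A \<Longrightarrow> xs s \<in> s \<and> real_edge K (Wt (xs s)) \<and> oth (xs s) \<in> c" by metis
  have "\<forall>s\<in>A. \<exists>t. t \<in> hexagons K \<and> t \<notin> A \<and> t \<noteq> c \<and> gadj K s t" using outs by blast
  then obtain ts where ts: "\<And>s. s \<in> A \<Longrightarrow> ts s \<in> hexagons K \<and> ts s \<notin> A \<and> ts s \<noteq> c \<and> gadj K s (ts s)" by metis
  have "\<forall>s\<in>A. \<exists>z. z \<in> s \<and> real_edge K (Wt z) \<and> oth z \<in> ts s" using ts gadj_ex by blast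
  then obtain zs where zs: "\<And>s. s \<in> A \<Longrightarrow> zs s \<in> s \<and> real_edge K (Wt (zs s)) \<and> oth (zs s) \<in> ts s" by metis
  have dxz: "pos s (xs s) mod 3 \<noteq> pos s (zs s) mod 3" if s: "s \<in> A" for s
    using ext_cl_ne[OF hA[OF s] c conjunct1[OF ts[OF s]]] xs[OF s] zs[OF s] ts[OF s] by metis
  have "\<forall>s\<in>A. \<exists>q<6. q mod 3 \<noteq> pos s (xs s) mod 3 \<and> q mod 3 \<noteq> pos s (zs s) mod 3" using third_ex dxz by blast
  then obtain qs where qs: "\<And>s. s \<in> A \<Longrightarrow> qs s < 6 \<and> qs s mod 3 \<noteq> pos s (xs s) mod 3 \<and> qs s mod 3 \<noteq> pos s (zs s) mod 3" by metis
  have IP: "(\<forall>m. pos c (oth (vsH s ! bdi m (pos s (xs s)) (qs s))) = pos c (oth (xs s)) \<or>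
              pos c (oth (vsH s ! bdi m (pos s (xs s)) (qs s))) = (pos c (oth (xs s)) + 3) mod 6) \<and>
         pos c (oth (vsH s ! bdi True (pos s (xs s)) (qs s))) \<noteq> pos c (oth (vsH s ! bdi False (pos s (xs s)) (qs s)))"
    if s: "s \<in> A" for s
    using img_pair[OF hA[OF s] c, of "xs s" "qs s"] xs[OF s] qs[OF s] by blast
  have "\<forall>s\<in>A. \<exists>m. even (pos c (oth (vsH s ! bdi m (pos s (xs s)) (qs s))))"
  proof
    fix s assume s: "s \<in> A"
    have k: "pos c (oth (xs s)) < 6" using pos[OF c] xs[OF s] by blast
    show "\<exists>m. even (pos c (oth (vsH s ! bdi m (pos s (xs s)) (qs s))))"
      using IP[OF s] even_opp[OF k] by metis
  qed
  then obtain ms where ms: "\<And>s. s \<in> A \<Longrightarrow> even (pos c (oth (vsH s ! bdi (ms s) (pos s (xs s)) (qs s))))" by metis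
  define rs where "rs s = vsH s ! qs s" for s
  have rs: "\<And>s. s \<in> A \<Longrightarrow> rs s \<in> s \<and> pos s (rs s) = qs s"
    unfolding rs_def using nth_in pos_nth hA qs by blast
  have oxs: "\<And>s. s \<in> A \<Longrightarrow> oth (xs s) \<notin> s" using hex_disj hA c sc xs by metis
  have ozs: "\<And>s. s \<in> A \<Longrightarrow> oth (zs s) \<notin> s" using hex_disj hA ts zs by metis
  have satw: "w = xs s \<or> w = bar K (xs s)" if s: "s \<in> A" and w: "w \<in> s" "real_edge K (Wt w)" "oth w \<in> \<Union>(insert c A)" for s w
  proof -
    obtain H' where H': "H' \<in> insert c A" "oth w \<in> H'" using w(3) by blast
    have H'h: "H' \<in> hexagons K" using H'(1) c A by blast
    have "H' \<noteq> s"
    proof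
      assume "H' = s"
      then show False using ext_int[OF hA[OF s] _ _ oxs[OF s] _ _ ozs[OF s] dxz[OF s] w(1)] xs[OF s] zs[OF s] H' by blast
    qed
    have wj: "Wt w \<in> joining K s H'" using join_char[OF hA[OF s] H'h] \<open>H' \<noteq> s\<close> w H' by metis
    have "H' = c"
    proof (rule ccontr)
      assume "H' \<noteq> c"
      then have "H' \<in> A" using H'(1) by blast
      moreover have "gadj K s H'" unfolding gadj_def using hA[OF s] H'h \<open>H' \<noteq> s\<close> wj by blast
      ultimately show False using nadj[OF s] \<open>H' \<noteq> s\<close> by blast
    qed
    then show ?thesis
      using join_two[OF hA[OF s] c sc[OF s] c2[OF hA[OF s] c sc[OF s]], of "xs s" w] xs[OF s] w H' by blast
  qed
  show ?thesis
  proof (rule GL[of "insert c A" c xs rs ms])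
    show "insert c A \<subseteq> hexagons K" using c A by blast
    show "c \<in> insert c A" by simp
  next
    fix s assume s: "s \<in> insert c A" "s \<noteq> c"
    then have sA: "s \<in> A" by simp
    show "xs s \<in> s \<and> oth (xs s) \<in> c \<and> real_edge K (Wt (xs s))" using xs[OF sA] by blast
    show "rs s \<in> s \<and> pos s (rs s) mod 3 \<noteq> pos s (xs s) mod 3" using rs[OF sA] qs[OF sA] by simp
  next
    fix e u v assume e: "real_edge K e" and u: "u \<in> pends K e" "u \<in> \<Union>(insert c A)"
      and v: "v \<in> pends K e" "v \<in> \<Union>(insert c A)" and uv: "u \<noteq> v"
    have i: "u \<in> pverts K" "e = Wt u" "v = oth u" using int_edge[OF e u(1) v(1) uv] by auto
    have vv: "v \<in> pverts K" using oth_V i by simp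
    have ev: "e = Wt v" "u = oth v" using Wt_oth[OF i(1)] oth_oth[OF i(1)] i by auto
    show "\<exists>s\<in>insert c A. s \<noteq> c \<and> (e = Wt (xs s) \<or> e = Wt (bar K (xs s)))"
    proof (cases "\<exists>s\<in>A. u \<in> s")
      case True
      then obtain s where s: "s \<in> A" "u \<in> s" by blast
      have "u = xs s \<or> u = bar K (xs s)" using satw[OF s(1) s(2)] e i v by simp
      then show ?thesis using s sc i by auto
    next
      case False
      then have uc: "u \<in> c" using u by blast
      show ?thesis
      proof (cases "\<exists>s\<in>A. v \<in> s")
        case True
        then obtain s where s: "s \<in> A" "v \<in> s" by blast
        have "v = xs s \<or> v = bar K (xs s)" using satw[OF s(1) s(2)] e ev u by simp
        then show ?thesis using s sc ev by auto
      next
        case False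
        then have "v \<in> c" using v by blast
        then show ?thesis using cint[OF uc] i by simp
      qed
    qed
  next
    fix u v assume "u \<in> c" "derived_edge K (Wt u)"
    then show "pos c u mod 3 = pos c v mod 3" using creal derived_not_real by blast
  next
    fix s v assume s: "s \<in> insert c A" "s \<noteq> c" and v: "v \<in> s" and dv: "derived_edge K (Wt v)"
    have sA: "s \<in> A" using s by simp
    have x: "xs s \<in> s" "real_edge K (Wt (xs s))" and z: "zs s \<in> s" "real_edge K (Wt (zs s))" using xs[OF sA] zs[OF sA] by auto
    have "pos s v mod 3 \<noteq> pos s (xs s) mod 3" "pos s v mod 3 \<noteq> pos s (zs s) mod 3"
      using cls_real[OF hA[OF sA] x] cls_real[OF hA[OF sA] z] v derived_not_real[OF dv] by auto
    then have "pos s v mod 3 = qs s mod 3" using third_cl[OF dxz[OF sA]] qs[OF sA] by blast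
    then show "pos s v mod 3 = pos s (rs s) mod 3" using rs[OF sA] by simp
  next
    fix s s' assume s: "s \<in> insert c A" "s' \<in> insert c A" "s \<noteq> c" "s' \<noteq> c" "s \<noteq> s'"
    have sA: "s \<in> A" "s' \<in> A" using s by auto
    let ?i = "pos c (oth (vsH s ! bdi (ms s) (pos s (xs s)) (pos s (rs s))))"
    let ?j = "pos c (oth (vsH s' ! bdi (ms s') (pos s' (xs s')) (pos s' (rs s'))))"
    have pi: "?i = pos c (oth (xs s)) \<or> ?i = (pos c (oth (xs s)) + 3) mod 6" using IP[OF sA(1)] rs[OF sA(1)] by simp
    have pj: "?j = pos c (oth (xs s')) \<or> ?j = (pos c (oth (xs s')) + 3) mod 6" using IP[OF sA(2)] rs[OF sA(2)] by simp
    have ki: "pos c (oth (xs s)) < 6" using pos[OF c] xs[OF sA(1)] by blast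
    have kj: "pos c (oth (xs s')) < 6" using pos[OF c] xs[OF sA(2)] by blast
    have y1: "oth (xs s) \<in> c" "real_edge K (Wt (oth (xs s)))" "oth (oth (xs s)) \<in> s"
      using xs[OF sA(1)] Wt_oth oth_oth hex_V[OF hA[OF sA(1)]] by auto
    have y2: "oth (xs s') \<in> c" "real_edge K (Wt (oth (xs s')))" "oth (oth (xs s')) \<in> s'"
      using xs[OF sA(2)] Wt_oth oth_oth hex_V[OF hA[OF sA(2)]] by auto
    have dk: "pos c (oth (xs s)) mod 3 \<noteq> pos c (oth (xs s')) mod 3"
      using ext_cl_ne[OF c hA[OF sA(1)] hA[OF sA(2)] s(5) y1 y2] .
    have "?i mod 3 \<noteq> ?j mod 3" using pi pj dk mod3_opp by auto
    then have "?i \<noteq> ?j" by auto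
    moreover have "even ?i" "even ?j" using ms[OF sA(1)] ms[OF sA(2)] rs[OF sA(1)] rs[OF sA(2)] by auto
    moreover have "?i < 6" "?j < 6" using pi pj ki kj by auto
    ultimately show "?i div 2 \<noteq> ?j div 2" using even_div2 by blast
  next
    fix s d assume "d \<in> c" "derived_edge K (Wt d)"
    then show "pos c d div 2 \<noteq> pos c (oth (vsH s ! bdi (ms s) (pos s (xs s)) (pos s (rs s)))) div 2"
      using creal derived_not_real by blast
  qed
qed

end



lemma card2_ex: assumes "finite X" "card X \<ge> 2" shows "\<exists>x y. x \<in> X \<and> y \<in> X \<and> x \<noteq> y"
proof -
  have "X \<noteq> {}" using assms by auto
  then obtain x where x: "x \<in> X" by blast
  have "card (X - {x}) \<ge> 1" using assms x by (simp add: card_Diff_singleton)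
  then have "X - {x} \<noteq> {}" by (metis card.empty not_one_le_zero)
  then obtain y where "y \<in> X - {x}" by blast
  then show ?thesis using x by blast
qed

lemma pigeon3: "(a::nat) mod 3 \<noteq> b mod 3 \<Longrightarrow> a mod 3 \<noteq> d mod 3 \<Longrightarrow> b mod 3 \<noteq> d mod 3
  \<Longrightarrow> u mod 3 = a mod 3 \<or> u mod 3 = b mod 3 \<or> u mod 3 = d mod 3"
proof -
  assume h: "a mod 3 \<noteq> b mod 3" "a mod 3 \<noteq> d mod 3" "b mod 3 \<noteq> d mod 3"
  have l: "\<And>A B D U::nat. A < 3 \<Longrightarrow> B < 3 \<Longrightarrow> D < 3 \<Longrightarrow> U < 3 \<Longrightarrow> A \<noteq> B \<Longrightarrow> A \<noteq> D \<Longrightarrow> B \<noteq> D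
     \<Longrightarrow> U = A \<or> U = B \<or> U = D"
    by (auto simp: less_Suc_eq numeral_eq_Suc)
  show ?thesis by (rule l) (use h in auto)
qed

context PH begin

lemma fin_out: "finite (out_nbrs K S s)"
  unfolding out_nbrs_def using fin_hex by auto

lemma star_case:
  assumes n2: "no_2cycle K" and S: "S \<subseteq> hexagons K"
    and sh: "S = {c, a1, a2, a3}" "distinct [c, a1, a2, a3]"
    and iff: "\<forall>u\<in>S. \<forall>v\<in>S. gadj K u v \<longleftrightarrow> (u = c \<and> v \<in> {a1, a2, a3}) \<or> (v = c \<and> u \<in> {a1, a2, a3})"
    and o1: "card (out_nbrs K S a1) = 1" and o2: "card (out_nbrs K S a2) = 1" and o3: "card (out_nbrs K S a3) = 1"
  shows "safely_reducible K S"
proof -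
  define A where "A = {a1, a2, a3}"
  have SA: "S = insert c A" unfolding A_def using sh by simp
  have c: "c \<in> hexagons K" using S sh by simp
  have A: "A \<subseteq> hexagons K" "c \<notin> A" using S sh unfolding A_def by auto
  have adjc: "gadj K s c" if ss: "s \<in> A" for s
  proof -
    have m: "s \<in> S" "c \<in> S" "s \<in> {a1,a2,a3}" using ss SA unfolding A_def by auto
    show ?thesis using iff m by blast
  qed
  have outs: "\<exists>t\<in>hexagons K. t \<notin> A \<and> t \<noteq> c \<and> gadj K s t" if s: "s \<in> A" for s
  proof -
    have "card (out_nbrs K S s) = 1" using s o1 o2 o3 unfolding A_def by auto
    then obtain t where "out_nbrs K S s = {t}" by (rule card_1_singletonE)
    then have "t \<in> hexagons K - S" "gadj K s t" unfolding out_nbrs_def by auto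
    then show ?thesis using SA by blast
  qed
  have nadj: "\<not> gadj K s s'" if ss: "s \<in> A" "s' \<in> A" "s \<noteq> s'" for s s'
  proof -
    have m: "s \<in> S" "s' \<in> S" "s \<noteq> c" "s' \<noteq> c" using ss SA A(2) by auto
    show ?thesis using iff m by blast
  qed
  have a: "a1 \<in> hexagons K" "a2 \<in> hexagons K" "a3 \<in> hexagons K" using S sh by auto
  have dd: "a1 \<noteq> a2" "a1 \<noteq> a3" "a2 \<noteq> a3" using sh by auto
  obtain x1 where x1: "x1 \<in> a1" "real_edge K (Wt x1)" "oth x1 \<in> c" using gadj_ex adjc unfolding A_def by blast
  obtain x2 where x2: "x2 \<in> a2" "real_edge K (Wt x2)" "oth x2 \<in> c" using gadj_ex adjc unfolding A_def by blast
  obtain x3 where x3: "x3 \<in> a3" "real_edge K (Wt x3)" "oth x3 \<in> c" using gadj_ex adjc unfolding A_def by blast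
  have yy: "oth x \<in> c \<and> real_edge K (Wt (oth x)) \<and> oth (oth x) \<in> s"
    if "s \<in> hexagons K" "x \<in> s" "real_edge K (Wt x)" "oth x \<in> c" for s x
  proof -
    have xv: "x \<in> pverts K" using hex_V[OF that(1)] that(2) by blast
    show ?thesis using that Wt_oth[OF xv] oth_oth[OF xv] by simp
  qed
  note y1 = yy[OF a(1) x1] and y2 = yy[OF a(2) x2] and y3 = yy[OF a(3) x3]
  have d12: "pos c (oth x1) mod 3 \<noteq> pos c (oth x2) mod 3" using ext_cl_ne[OF c a(1) a(2) dd(1)] y1 y2 by blast
  have d13: "pos c (oth x1) mod 3 \<noteq> pos c (oth x3) mod 3" using ext_cl_ne[OF c a(1) a(3) dd(2)] y1 y3 by blast
  have d23: "pos c (oth x2) mod 3 \<noteq> pos c (oth x3) mod 3" using ext_cl_ne[OF c a(2) a(3) dd(3)] y2 y3 by blast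
  have cA: "c \<noteq> a1" "c \<noteq> a2" "c \<noteq> a3" using sh by auto
  have nc: "oth (oth x1) \<notin> c" "oth (oth x2) \<notin> c" "oth (oth x3) \<notin> c"
    using hex_disj[OF c a(1)] hex_disj[OF c a(2)] hex_disj[OF c a(3)] y1 y2 y3 cA by blast+
  have cc: "real_edge K (Wt u) \<and> oth u \<notin> c" if u: "u \<in> c" for u
  proof -
    have "pos c u mod 3 = pos c (oth x1) mod 3 \<or> pos c u mod 3 = pos c (oth x2) mod 3 \<or> pos c u mod 3 = pos c (oth x3) mod 3"
      using pigeon3[OF d12 d13 d23] by blast
    then show ?thesis
      using cls_real[OF c _ _ u] cls_out[OF c _ _ _ u] y1 y2 y3 nc by blast
  qed
  show ?thesis unfolding SA
    by (rule star_general[OF n2 c A adjc outs nadj]) (use cc in auto)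
qed

end

theorem mainTheorem7:
  fixes L :: forktype
    and K :: "('v, 'e) cgraph"
    and K' :: "('w, 'f) cgraph"
    and S :: "'v set set"
  assumes "L \<in> {StarFork, Subfork, Dot}"
    and "proper K" and "proper K'"
    and "L_addition L K' K S"
  shows "safely_reducible K S"
proof -
  have pr: "pseudohex K" "\<not> has_end K" "two_connected (hexagons K) (gadj K)" "no_2cycle K"
    using assms(2) unfolding proper_def by auto
  have "hexagons K \<noteq> {}" using pr(3) unfolding two_connected_def by auto
  then obtain vs where vs: "blue_cycle K vs" unfolding hexagons_def by blast
  have "pverts K \<noteq> {}"
  proof -
    have "length vs = 6" "set vs \<subseteq> pverts K" using vs unfolding blue_cycle_def by auto
    then show ?thesis by (metis empty_iff list.set_sel(1) list.size(3) subset_empty zero_neq_numeral)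
  qed
  then have ph: "wf_cgraph K" "bipartite_cg K"
    "\<forall>x\<in>pverts K. blue_deg K x = 2 \<and> (\<exists>vs. blue_cycle K vs \<and> x \<in> set vs)"
    "\<forall>x\<in>pverts K. \<exists>r\<in>col_edges K Red. pends K r = {x, bar K x}"
    "\<forall>x\<in>pverts K. white_deg K x = 1"
    using pr(1) unfolding pseudohex_def by auto
  interpret PH K by (unfold_locales) (use ph pr(2) in auto)
  have S: "S \<subseteq> hexagons K" and bs: "bold_shape L K S" using assms(4) unfolding L_addition_def by auto
  show ?thesis
  proof (cases L)
    case StarFork
    have "\<exists>c a1 a2 a3. S = {c, a1, a2, a3} \<and> distinct [c, a1, a2, a3] \<and>
        (\<forall>u\<in>S. \<forall>v\<in>S. gadj K u v \<longleftrightarrow> (u = c \<and> v \<in> {a1, a2, a3}) \<or> (v = c \<and> u \<in> {a1, a2, a3})) \<and>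
        card (out_nbrs K S c) = 0 \<and> card (out_nbrs K S a1) = 1 \<and>
        card (out_nbrs K S a2) = 1 \<and> card (out_nbrs K S a3) = 1"
      using bs StarFork unfolding bold_shape_def by simp
    then obtain c a1 a2 a3 where sh: "S = {c, a1, a2, a3}" "distinct [c, a1, a2, a3]"
      "\<forall>u\<in>S. \<forall>v\<in>S. gadj K u v \<longleftrightarrow> (u = c \<and> v \<in> {a1, a2, a3}) \<or> (v = c \<and> u \<in> {a1, a2, a3})"
      "card (out_nbrs K S a1) = 1" "card (out_nbrs K S a2) = 1" "card (out_nbrs K S a3) = 1"
      apply (elim exE conjE)
      apply (rule that)
           apply assumption+
      done
    show ?thesis by (rule star_case[OF pr(4) S sh])
  next
    case Subfork
    then obtain a b where sh: "S = {a, b}" "a \<noteq> b" "gadj K a b"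
      "card (out_nbrs K S a) = 1" "card (out_nbrs K S b) = 1"
      using bs Subfork unfolding bold_shape_def by auto
    obtain ta where ta: "out_nbrs K S a = {ta}" using sh(4) by (rule card_1_singletonE)
    obtain tb where tb: "out_nbrs K S b = {tb}" using sh(5) by (rule card_1_singletonE)
    have ta': "ta \<in> hexagons K" "ta \<noteq> a" "ta \<noteq> b" "gadj K a ta" using ta sh(1) unfolding out_nbrs_def by auto
    have tb': "tb \<in> hexagons K" "tb \<noteq> a" "tb \<noteq> b" "gadj K b tb" using tb sh(1) unfolding out_nbrs_def by auto
    have ab: "a \<in> hexagons K" "b \<in> hexagons K" using S sh(1) by auto
    show ?thesis unfolding sh(1)
      by (rule subfork_case[OF pr(4) ab sh(2) gadj_sym[OF sh(3)] ta' tb'])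
  next
    case Dot
    then obtain a where sh: "S = {a}" "card (out_nbrs K S a) \<in> {2, 3}"
      using bs Dot unfolding bold_shape_def by auto
    have "card (out_nbrs K S a) \<ge> 2" using sh(2) by auto
    then obtain t1 t2 where t: "t1 \<in> out_nbrs K S a" "t2 \<in> out_nbrs K S a" "t1 \<noteq> t2"
      using card2_ex[OF fin_out] by blast
    have t': "t1 \<in> hexagons K" "t2 \<in> hexagons K" "t1 \<noteq> a" "t2 \<noteq> a" "gadj K a t1" "gadj K a t2"
      using t sh(1) unfolding out_nbrs_def by auto
    have a: "a \<in> hexagons K" using S sh(1) by auto
    show ?thesis unfolding sh(1) by (rule dot_case[OF a t'(1,2) t(3) t'(3,4,5,6)])
  qed
qed


end
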